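(* Consider the stacked dataset and the regression $$\Delta Y_{i,t,g}=\lambda_{s,t,g}+\eta_{q,t,g}+\sum_{e\in\{-L,\dots,K\}\setminus\{-1\}}\tau_e\,\mathbb 1\{S_i=g,Q_i=1,t=g+e\}+\varepsilon_{i,t,g},$$ where $\lambda_{s,t,g}$ is a fixed effect for each (group $s\in\{g,g_c(g)\}$, period $t$, stack $g$) and $\eta_{q,t,g}$ for each (eligibility $q\in\{0,1\}$, period $t$, stack $g$). Assume every cell count in every stack is positive. Then for each $e\neq-1$ the OLS coefficient satisfies, with $\mathcal G_{\mathrm{trg}}(e)=\{g\in\mathcal G_{\mathrm{trg}}:1\le g+e\le T\}$, $$\hat\tau_e=\sum_{g\in\mathcal G_{\mathrm{trg}}(e)}w^{\mathrm{FWL}}_g(e)\,\hat\tau^{\mathrm{sat}}_{g,g+e},\qquad w^{\mathrm{FWL}}_g(e)=\frac{V_{g}}{\sum_{g'\in\mathcal G_{\mathrm{trg}}(e)}V_{g'}},\quad V_g=\Big(\tfrac1{n^{(g)}_{g,1}}+\tfrac1{n^{(g)}_{g,0}}+\tfrac1{n^{(g)}_{g_c(g),1}}+\tfrac1{n^{(g)}_{g_c(g),0}}\Big)^{-1},$$ so $w^{\mathrm{FWL}}_g(e)>0$ and $\sum_gw^{\mathrm{FWL}}_g(e)=1$. Moreover, under i.i.d. sampling, overlap, no anticipation, DDD-PCT, admissibility and non-vanishing shares, $w^{\mathrm{FWL}}_g(e)\xrightarrow{p}w^*_g(e)$ for constants $w^*_g(e)>0$ summing to one, and $\hat\tau_e\xrightarrow{p}\sum_{g\in\mathcal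 G_{\mathrm{trg}}(e)}w^*_g(e)\,\mathrm{CATT}(g,e)$; in particular no $\mathrm{CATT}(g,e')$ with $e'\ne e$ enters the limit.
   Context: Setup: $n$ units observed over $t\in\{1,\dots,T\}$ ($T$ fixed, number of cohorts fixed, $n\to\infty$); treatment-enabling group $S_i\in\mathcal S\subseteq\{2,\dots,T\}\cup\{\infty\}$; time-invariant eligibility $Q_i\in\{0,1\}$; $\mathcal G_{\mathrm{trg}}=\mathcal S\setminus\{\infty\}$. Potential outcomes $Y_{i,t}(g)$, $Y_{i,t}(\infty)$ with $Y_{i,t}(g)=Y_{i,t}(\infty)$ for $t<g$; observed $Y_{i,t}=Y_{i,t}(g)$ if $S_i=g\in\mathcal G_{\mathrm{trg}}$, $Q_i=1$, else $Y_{i,t}(\infty)$. $\mathrm{CATT}(g,e)=\mathbb E[Y_{i,g+e}(g)-Y_{i,g+e}(\infty)\mid S_i=g,Q_i=1]$. Stacks: window lengths $L\ge1$, $K\ge0$; for each $g\in\mathcal G_{\mathrm{trg}}$ a comparison group $g_c(g)\in\mathcal S$ with $g_c(g)>g+K$; stack $\mathbb S_g$ contains units with $S_i\in\{g,g_c(g)\}$ over periods $\{g-L,\dots,g+K\}$, with four cells $(S_i,Q_i)\in\{(g,1),(g,0),(g_c(g),1),(g_c(g),0)\}$ of counts $n^{(g)}_{s,q}$. The stacked dataset has one observation $(i,t,g)$ per stack $g$, unit $i\in\mathbb S_g$, period $t$ in the window (a unit may appear in several stacks), with outcome $\Delta Y_{i,t,g}=Y_{i,t}-Y_{i,g-1}$.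 $\hat\tau^{\mathrm{sat}}_{g,t}=(\overline{\Delta Y}_{g,1,t}-\overline{\Delta Y}_{g,0,t})-(\overline{\Delta Y}_{g_c,1,t}-\overline{\Delta Y}_{g_c,0,t})$ computed within $\mathbb S_g$ with cell means of $\Delta Y_{i,t,g}$. Assumptions: i.i.d. sampling with finite second moments; overlap $\mathbb P(S_i=s,Q_i=q)>0$; no anticipation ($Y_{i,t}(g)=Y_{i,t}(\infty)$ a.s. for $t<g$); DDD-PCT: for all $g\in\mathcal G_{\mathrm{trg}}$, $g_c\in\mathcal S$, $g_c>g$, $t\in\{2,\dots,T\}$, $t\le g_c$: $\Delta_t(g,1)-\Delta_t(g,0)=\Delta_t(g_c,1)-\Delta_t(g_c,0)$ with $\Delta_t(s,q)=\mathbb E[Y_{i,t}(\infty)-Y_{i,t-1}(\infty)\mid S_i=s,Q_i=q]$; admissibility: each stack cell has positive probability; non-vanishing shares: $n_g/n$ and within-stack shares $n^{(g)}_{s,q}/n_g$ converge in probability to strictly positive limits, where $n_g=\sum_{s,q}n^{(g)}_{s,q}$. *)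

theory Defs
  imports "HOL-Probability.Probability" "HOL-Library.Extended_Nat"
begin

(* Groups are encoded as enat: enat g for cohort g, \<infinity> for never-enabled. *)

definition Gtrg :: "enat set \<Rightarrow> nat set" where
  "Gtrg SS = {g. enat g \<in> SS}"

definition Gtrg_e :: "nat \<Rightarrow> enat set \<Rightarrow> int \<Rightarrow> nat set" where
  "Gtrg_e T SS e = {g \<in> Gtrg SS. 1 \<le> int g + e \<and> int g + e \<le> int T}"

definition window :: "nat \<Rightarrow> nat \<Rightarrow> nat \<Rightarrow> nat \<Rightarrow> nat set" where
  "window T L K g = {t. 1 \<le> t \<and> t \<le> T \<and> int g - int L \<le> int t \<and> t \<le> g + K}"

definition event_times :: "nat \<Rightarrow> nat \<Rightarrow> int set" where
  "event_times L K = {- int L .. int K} - {-1}"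

definition stack_obs ::
  "nat \<Rightarrow> nat \<Rightarrow> nat \<Rightarrow> enat set \<Rightarrow> (nat \<Rightarrow> enat) \<Rightarrow> nat \<Rightarrow> (nat \<Rightarrow> enat) \<Rightarrow> (nat \<times> nat \<times> nat) set" where
  "stack_obs T L K SS gc n S =
     {(i,t,g). g \<in> Gtrg SS \<and> i < n \<and> (S i = enat g \<or> S i = gc g) \<and> t \<in> window T L K g}"

definition dY :: "(nat \<Rightarrow> nat \<Rightarrow> real) \<Rightarrow> nat \<Rightarrow> nat \<Rightarrow> nat \<Rightarrow> real" where
  "dY Y i t g = Y i t - Y i (g - 1)"

definition ssr ::
  "nat \<Rightarrow> nat \<Rightarrow> nat \<Rightarrow> enat set \<Rightarrow> (nat \<Rightarrow> enat) \<Rightarrow>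
   nat \<Rightarrow> (nat \<Rightarrow> enat) \<Rightarrow> (nat \<Rightarrow> bool) \<Rightarrow> (nat \<Rightarrow> nat \<Rightarrow> real) \<Rightarrow>
   (enat \<Rightarrow> nat \<Rightarrow> nat \<Rightarrow> real) \<times> (bool \<Rightarrow> nat \<Rightarrow> nat \<Rightarrow> real) \<times> (int \<Rightarrow> real) \<Rightarrow> real" where
  "ssr T L K SS gc n S Q Y p =
     (case p of (lam, eta, tau) \<Rightarrow>
       (\<Sum>(i,t,g)\<in>stack_obs T L K SS gc n S.
          (dY Y i t g - lam (S i) t g - eta (Q i) t g
           - (\<Sum>e\<in>event_times L K.
                tau e * (if S i = enat g \<and> Q i \<and> int t = int g + e then 1 else 0)))\<^sup>2))"

definition is_ols where
  "is_ols T L K SS gc n S Q Y p \<longleftrightarrow>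
     (\<forall>p'. ssr T L K SS gc n S Q Y p \<le> ssr T L K SS gc n S Q Y p')"

definition ols_tau where
  "ols_tau T L K SS gc n S Q Y e =
     (case (SOME p. is_ols T L K SS gc n S Q Y p) of (lam, eta, tau) \<Rightarrow> tau e)"

definition cell_n :: "nat \<Rightarrow> (nat \<Rightarrow> enat) \<Rightarrow> (nat \<Rightarrow> bool) \<Rightarrow> enat \<Rightarrow> bool \<Rightarrow> nat" where
  "cell_n n S Q s q = card {i. i < n \<and> S i = s \<and> Q i = q}"

definition stack_n :: "(nat \<Rightarrow> enat) \<Rightarrow> nat \<Rightarrow> (nat \<Rightarrow> enat) \<Rightarrow> (nat \<Rightarrow> bool) \<Rightarrow> nat \<Rightarrow> nat" where
  "stack_n gc n S Q g =
     cell_n n S Q (enat g) True + cell_n n S Q (enat g) False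
     + cell_n n S Q (gc g) True + cell_n n S Q (gc g) False"

definition cell_mean where
  "cell_mean n S Q Y g s q t =
     (\<Sum>i\<in>{i. i < n \<and> S i = s \<and> Q i = q}. dY Y i t g) / real (cell_n n S Q s q)"

definition tau_sat where
  "tau_sat gc n S Q Y g t =
     (cell_mean n S Q Y g (enat g) True t - cell_mean n S Q Y g (enat g) False t)
     - (cell_mean n S Q Y g (gc g) True t - cell_mean n S Q Y g (gc g) False t)"

definition V_stack where
  "V_stack gc n S Q g =
     inverse (1 / real (cell_n n S Q (enat g) True) + 1 / real (cell_n n S Q (enat g) False)
            + 1 / real (cell_n n S Q (gc g) True) + 1 / real (cell_n n S Q (gc g) False))"

definition w_fwl where
  "w_fwl T SS gc n S Q e g =
     V_stack gc n S Q g / (\<Sum>g'\<in>Gtrg_e T SS e. V_stack gc n S Q g')"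

(* convergence in (outer) probability of a sequence of (possibly non-measurable) maps *)
definition conv_prob :: "'a measure \<Rightarrow> (nat \<Rightarrow> 'a \<Rightarrow> real) \<Rightarrow> real \<Rightarrow> bool" where
  "conv_prob M X c \<longleftrightarrow>
     (\<forall>\<epsilon>>0. \<exists>A. (\<forall>n. A n \<in> sets M \<and> {\<omega>\<in>space M. \<epsilon> < \<bar>X n \<omega> - c\<bar>} \<subseteq> A n)
               \<and> (\<lambda>n. measure M (A n)) \<longlonglongrightarrow> 0)"

definition Yobs :: "enat set \<Rightarrow> enat \<Rightarrow> bool \<Rightarrow> (enat \<Rightarrow> nat \<Rightarrow> real) \<Rightarrow> nat \<Rightarrow> real" where
  "Yobs SS s q Y t = (if s \<noteq> \<infinity> \<and> s \<in> SS \<and> q then Y s t else Y \<infinity> t)"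

(* measurable space of one unit's data (S_i, Q_i, (Y_{i,t}(g))_{g,t}) *)
definition unit_space :: "nat \<Rightarrow> enat set \<Rightarrow> (enat \<times> bool \<times> (enat \<times> nat \<Rightarrow> real)) measure" where
  "unit_space T SS = count_space UNIV \<Otimes>\<^sub>M count_space UNIV \<Otimes>\<^sub>M
                      PiM (insert \<infinity> SS \<times> {1..T}) (\<lambda>_. borel)"

definition unit_rv where
  "unit_rv T SS Sv Qv Yp i \<omega> =
     (Sv i \<omega>, Qv i \<omega>, restrict (\<lambda>(g,t). Yp i \<omega> g t) (insert \<infinity> SS \<times> {1..T}))"

(* E[X | S = s, Q = q] for unit 0 (units are identically distributed) *)
definition cond_exp_cell :: "'a measure \<Rightarrow> (nat \<Rightarrow> 'a \<Rightarrow> enat) \<Rightarrow> (nat \<Rightarrow> 'a \<Rightarrow> bool) \<Rightarrow> ('a \<Rightarrow> real) \<Rightarrow> enat \<Rightarrow> bool \<Rightarrow> real" where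
  "cond_exp_cell M Sv Qv X s q =
     (\<integral>\<omega>. X \<omega> * indicator {\<omega>\<in>space M. Sv 0 \<omega> = s \<and> Qv 0 \<omega> = q} \<omega> \<partial>M)
       / measure M {\<omega>\<in>space M. Sv 0 \<omega> = s \<and> Qv 0 \<omega> = q}"

definition Delta_trend where
  "Delta_trend M Sv Qv Yp t s q =
     cond_exp_cell M Sv Qv (\<lambda>\<omega>. Yp 0 \<omega> \<infinity> t - Yp 0 \<omega> \<infinity> (t - 1)) s q"

definition CATT where
  "CATT M Sv Qv Yp g e =
     cond_exp_cell M Sv Qv
       (\<lambda>\<omega>. Yp 0 \<omega> (enat g) (nat (int g + e)) - Yp 0 \<omega> \<infinity> (nat (int g + e))) (enat g) True"

end

theory Submission
  imports Defs
begin

lemma cell_sq: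
  fixes y :: "nat \<Rightarrow> real"
  assumes "finite A"
  shows "(\<Sum>i\<in>A. (y i - f)\<^sup>2) = (\<Sum>i\<in>A. (y i - sum y A / card A)\<^sup>2) + real (card A) * (sum y A / card A - f)\<^sup>2"
proof (cases "card A = 0")
  case True
  then have "A = {}" using assms by simp
  then show ?thesis by simp
next
  case False
  define m where "m = sum y A / card A"
  have sm: "sum y A = real (card A) * m" using False by (simp add: m_def)
  have "(\<Sum>i\<in>A. (y i - f)\<^sup>2) = (\<Sum>i\<in>A. (y i - m)\<^sup>2 + 2 * (m - f) * (y i - m) + (m - f)\<^sup>2)"
    by (rule sum.cong) (auto simp: power2_eq_square algebra_simps)
  also have "\<dots> = (\<Sum>i\<in>A. (y i - m)\<^sup>2) + 2 * (m - f) * (sum y A - real (card A) * m) + real (card A) * (m - f)\<^sup>2"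
  proof -
    have "(\<Sum>i\<in>A. 2 * (m - f) * (y i - m)) = 2 * (m - f) * (\<Sum>i\<in>A. (y i - m))"
      by (simp add: sum_distrib_left)
    also have "(\<Sum>i\<in>A. (y i - m)) = sum y A - real (card A) * m"
      by (simp add: sum_subtractf)
    finally show ?thesis by (simp add: sum.distrib)
  qed
  also have "\<dots> = (\<Sum>i\<in>A. (y i - m)\<^sup>2) + real (card A) * (m - f)\<^sup>2" using sm by simp
  finally show ?thesis by (simp add: m_def)
qed

lemma quad_term: "(0::real) < a \<Longrightarrow> 2 * l * x - l\<^sup>2 / a \<le> a * r\<^sup>2 \<Longrightarrow> True" by simp

lemma quad_term2:
  fixes a l r :: real assumes "0 < a"
  shows "2 * l * r - l\<^sup>2 / a \<le> a * r\<^sup>2"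
proof -
  have "0 \<le> (a * r - l)\<^sup>2 / a" using assms by simp
  also have "(a * r - l)\<^sup>2 / a = a * r\<^sup>2 - 2 * l * r + l\<^sup>2 / a"
    using assms by (simp add: power2_eq_square field_simps)
  finally show ?thesis by simp
qed

lemma twobytwo_lb:
  fixes n1 n2 n3 n4 r1 r2 r3 r4 :: real
  assumes "0 < n1" "0 < n2" "0 < n3" "0 < n4"
  shows "inverse (1/n1 + 1/n2 + 1/n3 + 1/n4) * (r1 - r2 - r3 + r4)\<^sup>2
          \<le> n1 * r1\<^sup>2 + n2 * r2\<^sup>2 + n3 * r3\<^sup>2 + n4 * r4\<^sup>2"
proof -
  define H where "H = 1/n1 + 1/n2 + 1/n3 + 1/n4"
  define D where "D = r1 - r2 - r3 + r4"
  define l where "l = D / H"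
  have H: "0 < H" using assms unfolding H_def by (intro add_pos_pos) auto
  have "2 * l * r1 - l\<^sup>2 / n1 \<le> n1 * r1\<^sup>2" by (rule quad_term2[OF assms(1)])
  moreover have "2 * (-l) * r2 - (-l)\<^sup>2 / n2 \<le> n2 * r2\<^sup>2" by (rule quad_term2[OF assms(2)])
  moreover have "2 * (-l) * r3 - (-l)\<^sup>2 / n3 \<le> n3 * r3\<^sup>2" by (rule quad_term2[OF assms(3)])
  moreover have "2 * l * r4 - l\<^sup>2 / n4 \<le> n4 * r4\<^sup>2" by (rule quad_term2[OF assms(4)])
  ultimately have "2 * l * D - l\<^sup>2 * H \<le> n1 * r1\<^sup>2 + n2 * r2\<^sup>2 + n3 * r3\<^sup>2 + n4 * r4\<^sup>2"
    by (simp add: D_def H_def algebra_simps power2_eq_square)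
  moreover have "2 * l * D - l\<^sup>2 * H = inverse H * D\<^sup>2"
    using H by (simp add: l_def power2_eq_square field_simps)
  ultimately show ?thesis by (simp add: H_def D_def)
qed

lemma group_quad:
  fixes v D :: "'x \<Rightarrow> real" and \<kappa> :: "'x \<Rightarrow> 'e" and \<tau> :: "'e \<Rightarrow> real"
  assumes P: "finite P" and vpos: "\<And>x. x \<in> P \<Longrightarrow> 0 < v x"
  defines "ts \<equiv> (\<lambda>e. (\<Sum>x\<in>{x\<in>P. \<kappa> x = e}. v x * D x) / (\<Sum>x\<in>{x\<in>P. \<kappa> x = e}. v x))"
  shows "(\<Sum>x\<in>P. v x * (D x - \<tau> (\<kappa> x))\<^sup>2)
       = (\<Sum>x\<in>P. v x * (D x - ts (\<kappa> x))\<^sup>2) + (\<Sum>x\<in>P. v x * (ts (\<kappa> x) - \<tau> (\<kappa> x))\<^sup>2)"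
proof -
  have cross: "(\<Sum>x\<in>P. v x * (D x - ts (\<kappa> x)) * (ts (\<kappa> x) - \<tau> (\<kappa> x))) = 0"
  proof -
    have "(\<Sum>x\<in>P. v x * (D x - ts (\<kappa> x)) * (ts (\<kappa> x) - \<tau> (\<kappa> x)))
        = (\<Sum>e\<in>\<kappa> ` P. \<Sum>x\<in>{x\<in>P. \<kappa> x = e}. v x * (D x - ts (\<kappa> x)) * (ts (\<kappa> x) - \<tau> (\<kappa> x)))"
      by (rule sum.group[symmetric]) (use P in auto)
    also have "\<dots> = (\<Sum>e\<in>\<kappa> ` P. 0)"
    proof (rule sum.cong[OF refl])
      fix e assume e: "e \<in> \<kappa> ` P"
      define A where "A = {x\<in>P. \<kappa> x = e}"
      have A: "finite A" "A \<noteq> {}" using P e by (auto simp: A_def)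
      have sv: "0 < sum v A" using A vpos by (intro sum_pos) (auto simp: A_def)
      have "(\<Sum>x\<in>A. v x * (D x - ts (\<kappa> x)) * (ts (\<kappa> x) - \<tau> (\<kappa> x)))
          = (\<Sum>x\<in>A. v x * (D x - ts e) * (ts e - \<tau> e))"
        by (rule sum.cong) (auto simp: A_def)
      also have "\<dots> = (ts e - \<tau> e) * ((\<Sum>x\<in>A. v x * D x) - ts e * sum v A)"
      proof -
        have "(\<Sum>x\<in>A. v x * (D x - ts e) * (ts e - \<tau> e)) = (\<Sum>x\<in>A. (ts e - \<tau> e) * (v x * D x) - ((ts e - \<tau> e) * ts e) * v x)"
          by (rule sum.cong) (auto simp: algebra_simps)
        also have "\<dots> = (ts e - \<tau> e) * (\<Sum>x\<in>A. v x * D x) - ((ts e - \<tau> e) * ts e) * sum v A"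
          by (simp add: sum_subtractf sum_distrib_left)
        finally show ?thesis by (simp add: algebra_simps)
      qed
      also have "ts e * sum v A = (\<Sum>x\<in>A. v x * D x)"
        using sv by (simp add: ts_def A_def)
      finally show "(\<Sum>x\<in>{x\<in>P. \<kappa> x = e}. v x * (D x - ts (\<kappa> x)) * (ts (\<kappa> x) - \<tau> (\<kappa> x))) = 0"
        by (simp add: A_def)
    qed
    finally show ?thesis by simp
  qed
  have "(\<Sum>x\<in>P. v x * (D x - \<tau> (\<kappa> x))\<^sup>2)
      = (\<Sum>x\<in>P. v x * (D x - ts (\<kappa> x))\<^sup>2 + 2 * (v x * (D x - ts (\<kappa> x)) * (ts (\<kappa> x) - \<tau> (\<kappa> x)))
                 + v x * (ts (\<kappa> x) - \<tau> (\<kappa> x))\<^sup>2)"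
    by (rule sum.cong) (auto simp: power2_eq_square algebra_simps)
  also have "\<dots> = (\<Sum>x\<in>P. v x * (D x - ts (\<kappa> x))\<^sup>2) + 2 * (\<Sum>x\<in>P. v x * (D x - ts (\<kappa> x)) * (ts (\<kappa> x) - \<tau> (\<kappa> x)))
                 + (\<Sum>x\<in>P. v x * (ts (\<kappa> x) - \<tau> (\<kappa> x))\<^sup>2)"
    by (simp add: sum.distrib sum_distrib_left)
  finally show ?thesis using cross by simp
qed

lemma twobytwo_exact:
  fixes n1 n2 n3 n4 m1 m2 m3 m4 d :: real
  assumes "0 < n1" "0 < n2" "0 < n3" "0 < n4"
  defines "V \<equiv> inverse (1/n1 + 1/n2 + 1/n3 + 1/n4)"
  defines "D' \<equiv> (m1 - m2) - (m3 - m4) - d"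
  shows "n1 * (m1 - ((m2 + V*D'/n2) + (m3 + V*D'/n3 - (m4 - V*D'/n4)) + d))\<^sup>2
       + n2 * (m2 - ((m2 + V*D'/n2) + 0))\<^sup>2
       + n3 * (m3 - ((m4 - V*D'/n4) + (m3 + V*D'/n3 - (m4 - V*D'/n4))))\<^sup>2
       + n4 * (m4 - ((m4 - V*D'/n4) + 0))\<^sup>2 = V * D'\<^sup>2"
proof -
  define H where "H = 1/n1 + 1/n2 + 1/n3 + 1/n4"
  have H: "0 < H" using assms unfolding H_def by (intro add_pos_pos) auto
  have VH: "V * H = 1" using H by (simp add: V_def H_def[symmetric])
  have r1: "m1 - ((m2 + V*D'/n2) + (m3 + V*D'/n3 - (m4 - V*D'/n4)) + d) = V * D' / n1"
  proof -
    have "V*D'/n1 + V*D'/n2 + V*D'/n3 + V*D'/n4 = D' * (V * H)"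
      by (simp add: H_def algebra_simps)
    then have "V*D'/n1 + V*D'/n2 + V*D'/n3 + V*D'/n4 = D'" using VH by simp
    then show ?thesis unfolding D'_def by linarith
  qed
  have "n1 * (V * D' / n1)\<^sup>2 + n2 * (V*D'/n2)\<^sup>2 + n3 * (V*D'/n3)\<^sup>2 + n4 * (V*D'/n4)\<^sup>2
        = (V * D')\<^sup>2 * H"
    using assms(1-4) by (simp add: H_def power2_eq_square field_simps)
  also have "\<dots> = V * D'\<^sup>2 * (V * H)" by (simp add: power2_eq_square)
  finally have *: "n1 * (V * D' / n1)\<^sup>2 + n2 * (V*D'/n2)\<^sup>2 + n3 * (V*D'/n3)\<^sup>2 + n4 * (V*D'/n4)\<^sup>2 = V * D'\<^sup>2"
    using VH by simp
  show ?thesis unfolding r1 using * by (simp add: power2_eq_square)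
qed

lemma finite_event_times: "finite (event_times L K)"
  unfolding event_times_def by simp

lemma finite_window: "finite (window T L K g)"
  unfolding window_def by (rule finite_subset[of _ "{..T}"]) auto

context
  fixes T L K :: nat and SS :: "enat set" and gc :: "nat \<Rightarrow> enat"
    and n :: nat and S :: "nat \<Rightarrow> enat" and Q :: "nat \<Rightarrow> bool" and Y :: "nat \<Rightarrow> nat \<Rightarrow> real"
  assumes finG: "finite (Gtrg SS)"
    and cpos: "\<forall>g\<in>Gtrg SS. \<forall>s\<in>{enat g, gc g}. \<forall>q. 0 < cell_n n S Q s q"
    and gcne: "\<forall>g\<in>Gtrg SS. gc g \<noteq> enat g"
begin

definition "Cset s q = {i. i < n \<and> S i = s \<and> Q i = q}"
definition "Pset = (SIGMA g:Gtrg SS. window T L K g)"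
definition "Istk g = {i. i < n \<and> (S i = enat g \<or> S i = gc g)}"
definition "resid p i t g = (case p of (lam, eta, tau) \<Rightarrow>
   dY Y i t g - lam (S i) t g - eta (Q i) t g
           - (\<Sum>e\<in>event_times L K.
                tau e * (if S i = enat g \<and> Q i \<and> int t = int g + e then 1 else 0)))"
definition "dum tau g t = (if int t - int g \<in> event_times L K then tau (int t - int g) else (0::real))"
definition "Wc g t s q = (\<Sum>i\<in>Cset s q. (dY Y i t g - cell_mean n S Q Y g s q t)\<^sup>2)"
definition "Wgt g t = Wc g t (enat g) True + Wc g t (enat g) False + Wc g t (gc g) True + Wc g t (gc g) False"
definition "Gf tau = (\<Sum>(g,t)\<in>Pset. Wgt g t + V_stack gc n S Q g * (tau_sat gc n S Q Y g t - dum tau g t)\<^sup>2)"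

lemma finite_Cset: "finite (Cset s q)" unfolding Cset_def by auto
lemma finite_Pset: "finite Pset" unfolding Pset_def using finG finite_window by auto
lemma finite_Istk: "finite (Istk g)" unfolding Istk_def by auto

lemma ssr_split: "ssr T L K SS gc n S Q Y p = (\<Sum>(g,t)\<in>Pset. \<Sum>i\<in>Istk g. (resid p i t g)\<^sup>2)"
proof -
  have eq: "stack_obs T L K SS gc n S = (\<lambda>((g,t),i). (i,t,g)) ` (SIGMA x:Pset. Istk (fst x))"
    unfolding stack_obs_def Pset_def Istk_def by (auto simp: image_iff)
  have inj: "inj_on (\<lambda>((g,t),i). (i,t,g)) (SIGMA x:Pset. Istk (fst x))"
    by (auto simp: inj_on_def)
  have "ssr T L K SS gc n S Q Y p = (\<Sum>(i,t,g)\<in>stack_obs T L K SS gc n S. (resid p i t g)\<^sup>2)"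
    by (cases p) (simp add: ssr_def resid_def)
  also have "\<dots> = (\<Sum>((g,t),i)\<in>(SIGMA x:Pset. Istk (fst x)). (resid p i t g)\<^sup>2)"
    unfolding eq by (subst sum.reindex[OF inj]) (simp add: case_prod_beta)
  also have "\<dots> = (\<Sum>x\<in>Pset. \<Sum>i\<in>Istk (fst x). (resid p i (snd x) (fst x))\<^sup>2)"
    by (subst sum.Sigma[symmetric]) (auto simp: finite_Pset finite_Istk case_prod_beta)
  finally show ?thesis by (simp add: case_prod_beta)
qed

lemma Istk_split:
  assumes g: "g \<in> Gtrg SS"
  shows "(\<Sum>i\<in>Istk g. f i) = (\<Sum>i\<in>Cset (enat g) True. f i) + (\<Sum>i\<in>Cset (enat g) False. f i)
            + (\<Sum>i\<in>Cset (gc g) True. f i) + (\<Sum>i\<in>Cset (gc g) False. f i)"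
proof -
  have ne: "gc g \<noteq> enat g" using gcne g by auto
  have "Istk g = ((Cset (enat g) True \<union> Cset (enat g) False) \<union> Cset (gc g) True) \<union> Cset (gc g) False"
    unfolding Istk_def Cset_def by auto
  moreover have "(\<Sum>i\<in>((Cset (enat g) True \<union> Cset (enat g) False) \<union> Cset (gc g) True) \<union> Cset (gc g) False. f i)
     = (\<Sum>i\<in>Cset (enat g) True. f i) + (\<Sum>i\<in>Cset (enat g) False. f i)
            + (\<Sum>i\<in>Cset (gc g) True. f i) + (\<Sum>i\<in>Cset (gc g) False. f i)"
    using ne
    by (subst sum.union_disjoint, (auto simp: finite_Cset Cset_def)[3])+ simp
  ultimately show ?thesis by simp
qed

lemma ind_sum:
  assumes "i \<in> Cset s q"
  shows "(\<Sum>e\<in>event_times L K. tau e * (if S i = enat g \<and> Q i \<and> int t = int g + e then 1 else 0))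
       = (if s = enat g \<and> q then dum tau g t else 0)"
proof -
  have Si: "S i = s" "Q i = q" using assms by (auto simp: Cset_def)
  show ?thesis
  proof (cases "s = enat g \<and> q")
    case True
    have "(\<Sum>e\<in>event_times L K. tau e * (if S i = enat g \<and> Q i \<and> int t = int g + e then 1 else 0))
        = (\<Sum>e\<in>event_times L K. if e = int t - int g then tau e else 0)"
      by (rule sum.cong) (use True Si in auto)
    also have "\<dots> = dum tau g t"
      by (subst sum.delta[OF finite_event_times]) (simp add: dum_def)
    finally show ?thesis using True by simp
  next
    case False
    then show ?thesis using Si by auto
  qed
qed

lemma cell_contrib:
  fixes lam eta tau s q g t
  defines "f \<equiv> lam s t g + eta q t g + (if s = enat g \<and> q then dum tau g t else 0)"
  shows "(\<Sum>i\<in>Cset s q. (resid (lam,eta,tau) i t g)\<^sup>2)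
      = Wc g t s q + real (cell_n n S Q s q) * (cell_mean n S Q Y g s q t - f)\<^sup>2"
proof -
  have "(\<Sum>i\<in>Cset s q. (resid (lam,eta,tau) i t g)\<^sup>2) = (\<Sum>i\<in>Cset s q. (dY Y i t g - f)\<^sup>2)"
  proof (rule sum.cong[OF refl])
    fix i assume i: "i \<in> Cset s q"
    have Si: "S i = s" "Q i = q" using i by (auto simp: Cset_def)
    show "(resid (lam,eta,tau) i t g)\<^sup>2 = (dY Y i t g - f)\<^sup>2"
      unfolding resid_def using ind_sum[OF i, of tau g t] Si by (simp add: f_def algebra_simps)
  qed
  also have "\<dots> = Wc g t s q + real (cell_n n S Q s q) * (cell_mean n S Q Y g s q t - f)\<^sup>2"
    by (subst cell_sq[OF finite_Cset]) (simp add: Wc_def cell_mean_def cell_n_def Cset_def)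
  finally show ?thesis .
qed

lemma stack_contrib:
  assumes g: "g \<in> Gtrg SS"
  shows "(\<Sum>i\<in>Istk g. (resid (lam,eta,tau) i t g)\<^sup>2)
     = Wgt g t
       + real (cell_n n S Q (enat g) True) * (cell_mean n S Q Y g (enat g) True t - (lam (enat g) t g + eta True t g + dum tau g t))\<^sup>2
       + real (cell_n n S Q (enat g) False) * (cell_mean n S Q Y g (enat g) False t - (lam (enat g) t g + eta False t g))\<^sup>2
       + real (cell_n n S Q (gc g) True) * (cell_mean n S Q Y g (gc g) True t - (lam (gc g) t g + eta True t g))\<^sup>2
       + real (cell_n n S Q (gc g) False) * (cell_mean n S Q Y g (gc g) False t - (lam (gc g) t g + eta False t g))\<^sup>2"
  using gcne g
  by (simp add: Istk_split[OF g] cell_contrib Wgt_def)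

lemma stack_lb:
  assumes g: "g \<in> Gtrg SS"
  shows "Wgt g t + V_stack gc n S Q g * (tau_sat gc n S Q Y g t - dum tau g t)\<^sup>2
     \<le> (\<Sum>i\<in>Istk g. (resid (lam,eta,tau) i t g)\<^sup>2)"
proof -
  have p: "0 < real (cell_n n S Q (enat g) True)" "0 < real (cell_n n S Q (enat g) False)"
     "0 < real (cell_n n S Q (gc g) True)" "0 < real (cell_n n S Q (gc g) False)"
    using cpos g by auto
  note lb = twobytwo_lb[OF p,
     of "cell_mean n S Q Y g (enat g) True t - (lam (enat g) t g + eta True t g + dum tau g t)"
        "cell_mean n S Q Y g (enat g) False t - (lam (enat g) t g + eta False t g)"
        "cell_mean n S Q Y g (gc g) True t - (lam (gc g) t g + eta True t g)"
        "cell_mean n S Q Y g (gc g) False t - (lam (gc g) t g + eta False t g)"]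
  have "(cell_mean n S Q Y g (enat g) True t - (lam (enat g) t g + eta True t g + dum tau g t)) -
        (cell_mean n S Q Y g (enat g) False t - (lam (enat g) t g + eta False t g)) -
        (cell_mean n S Q Y g (gc g) True t - (lam (gc g) t g + eta True t g)) +
        (cell_mean n S Q Y g (gc g) False t - (lam (gc g) t g + eta False t g))
      = tau_sat gc n S Q Y g t - dum tau g t"
    by (simp add: tau_sat_def)
  from lb[unfolded this] show ?thesis unfolding stack_contrib[OF g] V_stack_def by linarith
qed

lemma ssr_lb: "Gf tau \<le> ssr T L K SS gc n S Q Y (lam, eta, tau)"
  unfolding ssr_split Gf_def
  by (rule sum_mono) (auto simp: Pset_def intro: stack_lb)


definition "fD tau g t = tau_sat gc n S Q Y g t - dum tau g t"
definition "cm g s q t = cell_mean n S Q Y g s q t"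
definition "cn s q = real (cell_n n S Q s q)"
definition "fA1 tau g t = cm g (enat g) False t + V_stack gc n S Q g * fD tau g t / cn (enat g) False"
definition "fA2 tau g t = cm g (gc g) False t - V_stack gc n S Q g * fD tau g t / cn (gc g) False"
definition "fB1 tau g t = cm g (gc g) True t + V_stack gc n S Q g * fD tau g t / cn (gc g) True - fA2 tau g t"
definition "lam_fit tau s t g = (if s = enat g then fA1 tau g t else fA2 tau g t)"
definition "eta_fit tau q t g = (if q then fB1 tau g t else 0)"

lemma ssr_fit: "ssr T L K SS gc n S Q Y (lam_fit tau, eta_fit tau, tau) = Gf tau"
  unfolding ssr_split Gf_def
proof (rule sum.cong[OF refl], clarify)
  fix g t assume gt: "(g, t) \<in> Pset"
  then have g: "g \<in> Gtrg SS" by (auto simp: Pset_def)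
  have ne: "gc g \<noteq> enat g" using gcne g by auto
  have p: "0 < cn (enat g) True" "0 < cn (enat g) False" "0 < cn (gc g) True" "0 < cn (gc g) False"
    using cpos g by (auto simp: cn_def)
  note ex = twobytwo_exact[OF p, of "cm g (enat g) True t" "cm g (enat g) False t" "cm g (gc g) True t" "cm g (gc g) False t" "dum tau g t"]
  show "(\<Sum>i\<in>Istk g. (resid (lam_fit tau, eta_fit tau, tau) i t g)\<^sup>2) =
        Wgt g t + V_stack gc n S Q g * (tau_sat gc n S Q Y g t - dum tau g t)\<^sup>2"
    unfolding stack_contrib[OF g] using ex ne
    by (simp add: lam_fit_def eta_fit_def fA1_def fA2_def fB1_def fD_def V_stack_def cm_def cn_def tau_sat_def add.assoc)
qed

definition "kap x = int (snd x) - int (fst x)"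
definition "P1 = {x\<in>Pset. kap x \<in> event_times L K}"
definition "vv x = V_stack gc n S Q (fst x)"
definition "DD x = tau_sat gc n S Q Y (fst x) (snd x)"
definition "tstar e = (\<Sum>x\<in>{x\<in>P1. kap x = e}. vv x * DD x) / (\<Sum>x\<in>{x\<in>P1. kap x = e}. vv x)"

lemma V_pos: "g \<in> Gtrg SS \<Longrightarrow> 0 < V_stack gc n S Q g"
  using cpos unfolding V_stack_def by (auto intro!: add_pos_pos)

lemma finite_P1: "finite P1" unfolding P1_def using finite_Pset by auto

lemma Gf_decomp:
  "Gf tau = ((\<Sum>x\<in>Pset. Wgt (fst x) (snd x)) + (\<Sum>x\<in>Pset - {x. kap x \<in> event_times L K}. vv x * (DD x)\<^sup>2))
           + (\<Sum>x\<in>P1. vv x * (DD x - tau (kap x))\<^sup>2)"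
proof -
  have "Gf tau = (\<Sum>x\<in>Pset. Wgt (fst x) (snd x)) + (\<Sum>x\<in>Pset. vv x * (DD x - dum tau (fst x) (snd x))\<^sup>2)"
    unfolding Gf_def by (simp add: sum.distrib case_prod_beta vv_def DD_def)
  also have "(\<Sum>x\<in>Pset. vv x * (DD x - dum tau (fst x) (snd x))\<^sup>2)
     = (\<Sum>x\<in>Pset \<inter> {x. kap x \<in> event_times L K}. vv x * (DD x - dum tau (fst x) (snd x))\<^sup>2)
     + (\<Sum>x\<in>Pset - {x. kap x \<in> event_times L K}. vv x * (DD x - dum tau (fst x) (snd x))\<^sup>2)"
    by (rule sum.Int_Diff[OF finite_Pset])
  also have "(\<Sum>x\<in>Pset \<inter> {x. kap x \<in> event_times L K}. vv x * (DD x - dum tau (fst x) (snd x))\<^sup>2)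
      = (\<Sum>x\<in>P1. vv x * (DD x - tau (kap x))\<^sup>2)"
    unfolding P1_def by (rule sum.cong) (auto simp: dum_def kap_def)
  also have "(\<Sum>x\<in>Pset - {x. kap x \<in> event_times L K}. vv x * (DD x - dum tau (fst x) (snd x))\<^sup>2)
      = (\<Sum>x\<in>Pset - {x. kap x \<in> event_times L K}. vv x * (DD x)\<^sup>2)"
    by (rule sum.cong) (auto simp: dum_def kap_def)
  finally show ?thesis by simp
qed

lemma Gf_eq: "Gf tau = Gf tstar + (\<Sum>x\<in>P1. vv x * (tstar (kap x) - tau (kap x))\<^sup>2)"
proof -
  have vp: "\<And>x. x \<in> P1 \<Longrightarrow> 0 < vv x"
    unfolding vv_def P1_def Pset_def by (auto intro: V_pos)
  note gq = group_quad[OF finite_P1 vp, where D=DD and \<kappa>=kap and \<tau>=tau]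
  have "tstar = (\<lambda>e. (\<Sum>x\<in>{x\<in>P1. kap x = e}. vv x * DD x) / (\<Sum>x\<in>{x\<in>P1. kap x = e}. vv x))"
    by (simp add: tstar_def fun_eq_iff)
  then show ?thesis using gq unfolding Gf_decomp by simp
qed

lemma Gf_min: "Gf tstar \<le> Gf tau"
proof -
  have "0 \<le> (\<Sum>x\<in>P1. vv x * (tstar (kap x) - tau (kap x))\<^sup>2)"
    unfolding vv_def P1_def Pset_def
    by (intro sum_nonneg mult_nonneg_nonneg) (auto intro: less_imp_le[OF V_pos])
  then show ?thesis using Gf_eq[of tau] by linarith
qed

lemma ols_exists: "is_ols T L K SS gc n S Q Y (lam_fit tstar, eta_fit tstar, tstar)"
  unfolding is_ols_def
proof
  fix p' :: "(enat \<Rightarrow> nat \<Rightarrow> nat \<Rightarrow> real) \<times> (bool \<Rightarrow> nat \<Rightarrow> nat \<Rightarrow> real) \<times> (int \<Rightarrow> real)"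
  obtain lam eta tau where p': "p' = (lam, eta, tau)" by (cases p') auto
  show "ssr T L K SS gc n S Q Y (lam_fit tstar, eta_fit tstar, tstar) \<le> ssr T L K SS gc n S Q Y p'"
    unfolding ssr_fit p' using Gf_min[of tau] ssr_lb[of tau lam eta] by linarith
qed

lemma ols_tau_eq:
  assumes ols: "is_ols T L K SS gc n S Q Y (lam, eta, tau)"
    and ne: "{x\<in>P1. kap x = e} \<noteq> {}"
  shows "tau e = tstar e"
proof -
  have "ssr T L K SS gc n S Q Y (lam, eta, tau) \<le> Gf tstar"
    using ols unfolding is_ols_def by (metis ssr_fit)
  then have "Gf tau \<le> Gf tstar" using ssr_lb[of tau lam eta] by linarith
  then have le: "(\<Sum>x\<in>P1. vv x * (tstar (kap x) - tau (kap x))\<^sup>2) \<le> 0"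
    using Gf_eq[of tau] by linarith
  have vp: "\<And>x. x \<in> P1 \<Longrightarrow> 0 < vv x"
    unfolding vv_def P1_def Pset_def by (auto intro: V_pos)
  have "(\<Sum>x\<in>{x\<in>P1. kap x = e}. vv x * (tstar e - tau e)\<^sup>2) \<le> (\<Sum>x\<in>P1. vv x * (tstar (kap x) - tau (kap x))\<^sup>2)"
  proof -
    have "(\<Sum>x\<in>{x\<in>P1. kap x = e}. vv x * (tstar e - tau e)\<^sup>2)
        = (\<Sum>x\<in>{x\<in>P1. kap x = e}. vv x * (tstar (kap x) - tau (kap x))\<^sup>2)"
      by (rule sum.cong) auto
    also have "\<dots> \<le> (\<Sum>x\<in>P1. vv x * (tstar (kap x) - tau (kap x))\<^sup>2)"
      by (rule sum_mono2[OF finite_P1]) (auto intro!: mult_nonneg_nonneg less_imp_le[OF vp])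
    finally show ?thesis .
  qed
  with le have "(\<Sum>x\<in>{x\<in>P1. kap x = e}. vv x) * (tstar e - tau e)\<^sup>2 \<le> 0"
    by (simp add: sum_distrib_right)
  moreover have "0 < (\<Sum>x\<in>{x\<in>P1. kap x = e}. vv x)"
    using ne vp finite_P1 by (intro sum_pos) auto
  ultimately have "(tstar e - tau e)\<^sup>2 \<le> 0"
    by (simp add: mult_le_0_iff)
  then show ?thesis by simp
qed


lemma P1e:
  assumes e: "e \<in> event_times L K"
  shows "{x\<in>P1. kap x = e} = (\<lambda>g. (g, nat (int g + e))) ` Gtrg_e T SS e"
proof (intro set_eqI iffI)
  fix x assume x: "x \<in> {x\<in>P1. kap x = e}"
  obtain g t where xg: "x = (g,t)" by (cases x)
  have "g \<in> Gtrg SS" "t \<in> window T L K g" "int t - int g = e"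
    using x unfolding xg P1_def Pset_def kap_def by auto
  then show "x \<in> (\<lambda>g. (g, nat (int g + e))) ` Gtrg_e T SS e"
    unfolding xg Gtrg_e_def window_def by (auto simp: image_iff)
next
  fix x assume "x \<in> (\<lambda>g. (g, nat (int g + e))) ` Gtrg_e T SS e"
  then obtain g where g: "g \<in> Gtrg_e T SS e" and xg: "x = (g, nat (int g + e))" by auto
  have "- int L \<le> e" "e \<le> int K" using e by (auto simp: event_times_def)
  then show "x \<in> {x\<in>P1. kap x = e}"
    using g e unfolding xg P1_def Pset_def kap_def Gtrg_e_def window_def by auto
qed

lemma finite_Gtrg_e: "finite (Gtrg_e T SS e)"
  using finG unfolding Gtrg_e_def by auto

lemma tstar_formula:
  assumes e: "e \<in> event_times L K" and ne: "Gtrg_e T SS e \<noteq> {}"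
  shows "tstar e = (\<Sum>g\<in>Gtrg_e T SS e. w_fwl T SS gc n S Q e g * tau_sat gc n S Q Y g (nat (int g + e)))"
proof -
  have inj: "inj_on (\<lambda>g. (g, nat (int g + e))) (Gtrg_e T SS e)" by (auto simp: inj_on_def)
  have "tstar e = (\<Sum>g\<in>Gtrg_e T SS e. V_stack gc n S Q g * tau_sat gc n S Q Y g (nat (int g + e)))
        / (\<Sum>g\<in>Gtrg_e T SS e. V_stack gc n S Q g)"
    unfolding tstar_def P1e[OF e] by (simp add: sum.reindex[OF inj] vv_def DD_def)
  also have "\<dots> = (\<Sum>g\<in>Gtrg_e T SS e. w_fwl T SS gc n S Q e g * tau_sat gc n S Q Y g (nat (int g + e)))"
    by (simp add: w_fwl_def sum_divide_distrib)
  finally show ?thesis .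
qed

lemma w_props:
  assumes ne: "Gtrg_e T SS e \<noteq> {}"
  shows "(\<forall>g\<in>Gtrg_e T SS e. 0 < w_fwl T SS gc n S Q e g) \<and> (\<Sum>g\<in>Gtrg_e T SS e. w_fwl T SS gc n S Q e g) = 1"
proof -
  have sub: "Gtrg_e T SS e \<subseteq> Gtrg SS" by (auto simp: Gtrg_e_def)
  have sp: "0 < (\<Sum>g\<in>Gtrg_e T SS e. V_stack gc n S Q g)"
    using ne sub finite_Gtrg_e by (intro sum_pos) (auto intro: V_pos)
  show ?thesis
    using sp sub V_pos unfolding w_fwl_def by (auto simp: sum_divide_distrib[symmetric])
qed

lemma partA_ctx:
  assumes e: "e \<in> event_times L K" and ne: "Gtrg_e T SS e \<noteq> {}"
  shows "(\<exists>p. is_ols T L K SS gc n S Q Y p)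
       \<and> (\<forall>lam eta tau. is_ols T L K SS gc n S Q Y (lam, eta, tau) \<longrightarrow>
            tau e = (\<Sum>g\<in>Gtrg_e T SS e.
                        w_fwl T SS gc n S Q e g * tau_sat gc n S Q Y g (nat (int g + e))))
       \<and> (\<forall>g\<in>Gtrg_e T SS e. 0 < w_fwl T SS gc n S Q e g)
       \<and> (\<Sum>g\<in>Gtrg_e T SS e. w_fwl T SS gc n S Q e g) = 1"
proof -
  have ne': "{x\<in>P1. kap x = e} \<noteq> {}" using ne unfolding P1e[OF e] by simp
  have "\<forall>lam eta tau. is_ols T L K SS gc n S Q Y (lam, eta, tau) \<longrightarrow>
            tau e = (\<Sum>g\<in>Gtrg_e T SS e.
                        w_fwl T SS gc n S Q e g * tau_sat gc n S Q Y g (nat (int g + e)))"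
    using ols_tau_eq[OF _ ne'] tstar_formula[OF e ne] by auto
  then show ?thesis
    using ols_exists w_props[OF ne] by blast
qed

end

lemma conv_prob_const: "conv_prob M (\<lambda>n \<omega>. c) c"
  unfolding conv_prob_def by (intro allI impI exI[of _ "\<lambda>n. {}"]) auto

lemma conv_prob_cong:
  assumes "conv_prob M X c" "\<And>n \<omega>. \<omega> \<in> space M \<Longrightarrow> X n \<omega> = Y n \<omega>"
  shows "conv_prob M Y c"
proof -
  have "{\<omega>\<in>space M. \<epsilon> < \<bar>Y n \<omega> - c\<bar>} = {\<omega>\<in>space M. \<epsilon> < \<bar>X n \<omega> - c\<bar>}" for \<epsilon> n
    using assms(2) by auto
  then show ?thesis using assms(1) unfolding conv_prob_def by simp
qed

lemma conv_prob_ae_eq: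
  assumes Y: "conv_prob M Y c"
    and B: "\<And>n. B n \<in> sets M" "\<And>n. {\<omega>\<in>space M. X n \<omega> \<noteq> Y n \<omega>} \<subseteq> B n"
    and Bl: "(\<lambda>n. measure M (B n)) \<longlonglongrightarrow> 0"
  shows "conv_prob M X c"
  unfolding conv_prob_def
proof (intro allI impI)
  fix \<epsilon> :: real assume e: "0 < \<epsilon>"
  obtain A where A0: "\<forall>n. A n \<in> sets M \<and> {\<omega>\<in>space M. \<epsilon> < \<bar>Y n \<omega> - c\<bar>} \<subseteq> A n"
     and Al: "(\<lambda>n. measure M (A n)) \<longlonglongrightarrow> 0"
    using Y e unfolding conv_prob_def by meson
  have A: "\<And>n. A n \<in> sets M" "\<And>n. {\<omega>\<in>space M. \<epsilon> < \<bar>Y n \<omega> - c\<bar>} \<subseteq> A n"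
    using A0 by auto
  show "\<exists>A. (\<forall>n. A n \<in> sets M \<and> {\<omega>\<in>space M. \<epsilon> < \<bar>X n \<omega> - c\<bar>} \<subseteq> A n) \<and> (\<lambda>n. measure M (A n)) \<longlonglongrightarrow> 0"
  proof (intro exI[of _ "\<lambda>n. A n \<union> B n"] conjI allI)
    fix n
    show "A n \<union> B n \<in> sets M" using A B by auto
    show "{\<omega>\<in>space M. \<epsilon> < \<bar>X n \<omega> - c\<bar>} \<subseteq> A n \<union> B n"
    proof clarify
      fix \<omega> assume w: "\<omega> \<in> space M" "\<epsilon> < \<bar>X n \<omega> - c\<bar>" "\<omega> \<notin> B n"
      then have "X n \<omega> = Y n \<omega>" using B(2)[of n] by blast
      then show "\<omega> \<in> A n" using A(2)[of n] w by auto
    qed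
  next
    have s: "(\<lambda>n. measure M (A n) + measure M (B n)) \<longlonglongrightarrow> 0"
      using tendsto_add[OF Al Bl] by simp
    show "(\<lambda>n. measure M (A n \<union> B n)) \<longlonglongrightarrow> 0"
    proof (rule tendsto_sandwich[OF _ _ tendsto_const s])
      show "\<forall>\<^sub>F n in sequentially. 0 \<le> measure M (A n \<union> B n)" by simp
      show "\<forall>\<^sub>F n in sequentially. measure M (A n \<union> B n) \<le> measure M (A n) + measure M (B n)"
        using A(1) B(1) by (simp add: measure_Un_le)
    qed
  qed
qed

lemma conv_prob_cont2:
  fixes f :: "real \<Rightarrow> real \<Rightarrow> real"
  assumes X: "conv_prob M X a" and Y: "conv_prob M Y b"
    and f: "isCont (\<lambda>z. f (fst z) (snd z)) (a, b)"
  shows "conv_prob M (\<lambda>n \<omega>. f (X n \<omega>) (Y n \<omega>)) (f a b)"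
  unfolding conv_prob_def
proof (intro allI impI)
  fix \<epsilon> :: real assume e: "0 < \<epsilon>"
  obtain \<delta> where d: "0 < \<delta>" and dd: "\<And>z. dist z (a,b) < \<delta> \<Longrightarrow> dist (f (fst z) (snd z)) (f a b) < \<epsilon>"
    using f e unfolding continuous_at_eps_delta by fastforce
  have d3: "0 < \<delta>/3" using d by simp
  obtain A where A0: "\<forall>n. A n \<in> sets M \<and> {\<omega>\<in>space M. \<delta>/3 < \<bar>X n \<omega> - a\<bar>} \<subseteq> A n"
     and Al: "(\<lambda>n. measure M (A n)) \<longlonglongrightarrow> 0"
    using X d3 unfolding conv_prob_def by meson
  have A: "\<And>n. A n \<in> sets M" "\<And>n. {\<omega>\<in>space M. \<delta>/3 < \<bar>X n \<omega> - a\<bar>} \<subseteq> A n"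
    using A0 by auto
  have d3: "0 < \<delta>/3" using d by simp
  obtain B where B0: "\<forall>n. B n \<in> sets M \<and> {\<omega>\<in>space M. \<delta>/3 < \<bar>Y n \<omega> - b\<bar>} \<subseteq> B n"
     and Bl: "(\<lambda>n. measure M (B n)) \<longlonglongrightarrow> 0"
    using Y d3 unfolding conv_prob_def by meson
  have B: "\<And>n. B n \<in> sets M" "\<And>n. {\<omega>\<in>space M. \<delta>/3 < \<bar>Y n \<omega> - b\<bar>} \<subseteq> B n"
    using B0 by auto
  show "\<exists>A. (\<forall>n. A n \<in> sets M \<and> {\<omega>\<in>space M. \<epsilon> < \<bar>f (X n \<omega>) (Y n \<omega>) - f a b\<bar>} \<subseteq> A n) \<and> (\<lambda>n. measure M (A n)) \<longlonglongrightarrow> 0"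
  proof (intro exI[of _ "\<lambda>n. A n \<union> B n"] conjI allI)
    fix n
    show "A n \<union> B n \<in> sets M" using A B by auto
    show "{\<omega>\<in>space M. \<epsilon> < \<bar>f (X n \<omega>) (Y n \<omega>) - f a b\<bar>} \<subseteq> A n \<union> B n"
    proof clarify
      fix \<omega> assume w: "\<omega> \<in> space M" and big: "\<epsilon> < \<bar>f (X n \<omega>) (Y n \<omega>) - f a b\<bar>" and nB: "\<omega> \<notin> B n"
      show "\<omega> \<in> A n"
      proof (rule ccontr)
        assume nA: "\<omega> \<notin> A n"
        have x: "\<bar>X n \<omega> - a\<bar> \<le> \<delta>/3" using A(2)[of n] nA w by force
        have y: "\<bar>Y n \<omega> - b\<bar> \<le> \<delta>/3" using B(2)[of n] nB w by force
        have "dist (X n \<omega>, Y n \<omega>) (a, b) \<le> \<bar>X n \<omega> - a\<bar> + \<bar>Y n \<omega> - b\<bar>"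
          unfolding dist_Pair_Pair dist_real_def using sqrt_sum_squares_le_sum_abs[of "X n \<omega> - a" "Y n \<omega> - b"] by simp
        also have "\<dots> < \<delta>" using x y d by linarith
        finally have "dist (f (X n \<omega>) (Y n \<omega>)) (f a b) < \<epsilon>" using dd[of "(X n \<omega>, Y n \<omega>)"] by simp
        then show False using big by (simp add: dist_real_def)
      qed
    qed
  next
    have s: "(\<lambda>n. measure M (A n) + measure M (B n)) \<longlonglongrightarrow> 0"
      using tendsto_add[OF Al Bl] by simp
    show "(\<lambda>n. measure M (A n \<union> B n)) \<longlonglongrightarrow> 0"
    proof (rule tendsto_sandwich[OF _ _ tendsto_const s])
      show "\<forall>\<^sub>F n in sequentially. 0 \<le> measure M (A n \<union> B n)" by simp
      show "\<forall>\<^sub>F n in sequentially. measure M (A n \<union> B n) \<le> measure M (A n) + measure M (B n)"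
        using A(1) B(1) by (simp add: measure_Un_le)
    qed
  qed
qed

lemma conv_prob_cont1:
  fixes f :: "real \<Rightarrow> real"
  assumes X: "conv_prob M X a" and f: "isCont f a"
  shows "conv_prob M (\<lambda>n \<omega>. f (X n \<omega>)) (f a)"
proof -
  have "isCont (\<lambda>z. f (fst z)) (a, a)"
  proof -
    have c1: "isCont (fst :: real\<times>real \<Rightarrow> real) (a,a)" by (intro continuous_intros)
    show ?thesis using isCont_o2[OF c1, of f] f by simp
  qed
  then show ?thesis using conv_prob_cont2[OF X X, of "\<lambda>x y. f x"] by simp
qed

lemma conv_prob_add:
  assumes X: "conv_prob M X a" and Y: "conv_prob M Y b"
  shows "conv_prob M (\<lambda>n \<omega>. X n \<omega> + Y n \<omega>) (a + b)"
proof -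
  have "isCont (\<lambda>z::real\<times>real. fst z + snd z) (a, b)" by (intro continuous_intros)
  then show ?thesis using conv_prob_cont2[OF X Y, of "(+)"] by simp
qed

lemma conv_prob_diff:
  assumes X: "conv_prob M X a" and Y: "conv_prob M Y b"
  shows "conv_prob M (\<lambda>n \<omega>. X n \<omega> - Y n \<omega>) (a - b)"
proof -
  have "isCont (\<lambda>z::real\<times>real. fst z - snd z) (a, b)" by (intro continuous_intros)
  then show ?thesis using conv_prob_cont2[OF X Y, of "(-)"] by simp
qed

lemma conv_prob_mult:
  assumes X: "conv_prob M X a" and Y: "conv_prob M Y b"
  shows "conv_prob M (\<lambda>n \<omega>. X n \<omega> * Y n \<omega>) (a * b)"
proof -
  have "isCont (\<lambda>z::real\<times>real. fst z * snd z) (a, b)" by (intro continuous_intros)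
  then show ?thesis using conv_prob_cont2[OF X Y, of "(*)"] by simp
qed

lemma conv_prob_inverse:
  assumes X: "conv_prob M X a" and a: "a \<noteq> 0"
  shows "conv_prob M (\<lambda>n \<omega>. inverse (X n \<omega>)) (inverse a)"
proof -
  have "isCont (\<lambda>x::real. inverse x) a" using a by (intro continuous_intros) auto
  then show ?thesis using conv_prob_cont1[OF X, of inverse] by simp
qed

lemma conv_prob_divide:
  assumes X: "conv_prob M X a" and Y: "conv_prob M Y b" and b: "b \<noteq> 0"
  shows "conv_prob M (\<lambda>n \<omega>. X n \<omega> / Y n \<omega>) (a / b)"
proof -
  have "conv_prob M (\<lambda>n \<omega>. X n \<omega> * inverse (Y n \<omega>)) (a * inverse b)"
    by (rule conv_prob_mult[OF X conv_prob_inverse[OF Y b]])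
  then show ?thesis by (simp add: divide_inverse)
qed

lemma conv_prob_sum:
  assumes "finite I" "\<And>i. i \<in> I \<Longrightarrow> conv_prob M (X i) (c i)"
  shows "conv_prob M (\<lambda>n \<omega>. \<Sum>i\<in>I. X i n \<omega>) (\<Sum>i\<in>I. c i)"
  using assms
proof (induction I rule: finite_induct)
  case empty then show ?case by (simp add: conv_prob_const)
next
  case (insert x F)
  have "conv_prob M (\<lambda>n \<omega>. X x n \<omega> + (\<Sum>i\<in>F. X i n \<omega>)) (c x + sum c F)"
    by (rule conv_prob_add) (use insert in auto)
  then show ?case using insert.hyps by simp
qed


context prob_space
begin

lemma iid_integral:
  assumes U: "\<And>i. U i \<in> measurable M N"
    and dist: "\<And>i. distr M N (U i) = distr M N (U 0)"
    and f: "f \<in> borel_measurable N"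
  shows "(\<integral>\<omega>. (f (U i \<omega>) :: real) \<partial>M) = (\<integral>\<omega>. f (U 0 \<omega>) \<partial>M)"
    and "integrable M (\<lambda>\<omega>. f (U i \<omega>)) \<longleftrightarrow> integrable M (\<lambda>\<omega>. f (U 0 \<omega>))"
proof -
  show "(\<integral>\<omega>. (f (U i \<omega>) :: real) \<partial>M) = (\<integral>\<omega>. f (U 0 \<omega>) \<partial>M)"
    using integral_distr[OF U f, of i] integral_distr[OF U f, of 0] dist[of i] by simp
  show "integrable M (\<lambda>\<omega>. f (U i \<omega>)) \<longleftrightarrow> integrable M (\<lambda>\<omega>. f (U 0 \<omega>))"
    using integrable_distr_eq[OF U f, of i] integrable_distr_eq[OF U f, of 0] dist[of i] by simp
qed

lemma wlln_bound:
  fixes h :: "'b \<Rightarrow> real"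
  assumes U: "\<And>i. U i \<in> measurable M N"
    and indep: "indep_vars (\<lambda>_. N) U UNIV"
    and dist: "\<And>i. distr M N (U i) = distr M N (U 0)"
    and h: "h \<in> borel_measurable N"
    and sq: "integrable M (\<lambda>\<omega>. (h (U 0 \<omega>))\<^sup>2)"
    and eps: "0 < \<epsilon>" and npos: "0 < n"
  shows "measure M {\<omega>\<in>space M. \<epsilon> \<le> \<bar>(\<Sum>i<n. h (U i \<omega>)) / real n - (\<integral>\<omega>. h (U 0 \<omega>) \<partial>M)\<bar>}
          \<le> (\<integral>\<omega>. (h (U 0 \<omega>) - (\<integral>\<omega>. h (U 0 \<omega>) \<partial>M))\<^sup>2 \<partial>M) / (real n * \<epsilon>\<^sup>2)"
proof -
  define \<mu> where "\<mu> = (\<integral>\<omega>. h (U 0 \<omega>) \<partial>M)"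
  define X where "X i \<omega> = h (U i \<omega>) - \<mu>" for i \<omega>
  define \<sigma>2 where "\<sigma>2 = (\<integral>\<omega>. (h (U 0 \<omega>) - \<mu>)\<^sup>2 \<partial>M)"
  have hU[measurable]: "(\<lambda>\<omega>. h (U i \<omega>)) \<in> borel_measurable M" for i
    using measurable_compose[OF U h] by (simp add: comp_def)
  have Xm[measurable]: "X i \<in> borel_measurable M" for i unfolding X_def by measurable
  have sqi: "integrable M (\<lambda>\<omega>. (h (U i \<omega>))\<^sup>2)" for i
    using iid_integral(2)[where U=U and N=N, OF U dist, of "\<lambda>x. (h x)\<^sup>2" i] h sq by simp
  have inti: "integrable M (\<lambda>\<omega>. h (U i \<omega>))" for i
    by (rule square_integrable_imp_integrable[OF hU sqi])
  have meani: "(\<integral>\<omega>. h (U i \<omega>) \<partial>M) = \<mu>" for i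
    unfolding \<mu>_def by (rule iid_integral(1)[where U=U and N=N, OF U dist h])
  have Xint: "integrable M (X i)" for i unfolding X_def using inti by auto
  have Xsq: "integrable M (\<lambda>\<omega>. (X i \<omega>)\<^sup>2)" for i
    unfolding X_def power2_diff using sqi inti
    by (intro Bochner_Integration.integrable_diff Bochner_Integration.integrable_add) auto
  have Xmean: "(\<integral>\<omega>. X i \<omega> \<partial>M) = 0" for i
    unfolding X_def using inti meani prob_space by (simp add: Bochner_Integration.integral_diff)
  have Xvar: "(\<integral>\<omega>. (X i \<omega>)\<^sup>2 \<partial>M) = \<sigma>2" for i
    unfolding X_def \<sigma>2_def
    using iid_integral(1)[where U=U and N=N, OF U dist, of "\<lambda>x. (h x - \<mu>)\<^sup>2" i] h by simp
  have indX: "indep_vars (\<lambda>_. borel) X UNIV"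
    unfolding X_def
    by (rule indep_vars_compose2[OF indep, where Y="\<lambda>i x. h x - \<mu>"]) (use h in measurable)
  have cross: "(\<integral>\<omega>. X i \<omega> * X j \<omega> \<partial>M) = (if i = j then \<sigma>2 else 0)"
     and crossint: "integrable M (\<lambda>\<omega>. X i \<omega> * X j \<omega>)" for i j
  proof -
    have "(\<integral>\<omega>. X i \<omega> * X j \<omega> \<partial>M) = (if i = j then \<sigma>2 else 0) \<and> integrable M (\<lambda>\<omega>. X i \<omega> * X j \<omega>)"
    proof (cases "i = j")
      case True then show ?thesis using Xvar[of i] Xsq[of i] by (simp add: power2_eq_square)
    next
      case False
      have ind2: "indep_vars (\<lambda>_. borel) X {i, j}" by (rule indep_vars_subset[OF indX]) auto
      have "(\<integral>\<omega>. (\<Prod>k\<in>{i,j}. X k \<omega>) \<partial>M) = (\<Prod>k\<in>{i,j}. \<integral>\<omega>. X k \<omega> \<partial>M)"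
        by (rule indep_vars_lebesgue_integral) (use ind2 Xint in auto)
      moreover have "integrable M (\<lambda>\<omega>. \<Prod>k\<in>{i,j}. X k \<omega>)"
        by (rule indep_vars_integrable) (use ind2 Xint in auto)
      ultimately show ?thesis using False Xmean by simp
    qed
    then show "(\<integral>\<omega>. X i \<omega> * X j \<omega> \<partial>M) = (if i = j then \<sigma>2 else 0)" "integrable M (\<lambda>\<omega>. X i \<omega> * X j \<omega>)"
      by auto
  qed
  define Sn where "Sn \<omega> = (\<Sum>i<n. X i \<omega>)" for \<omega>
  have Sn_sq: "(Sn \<omega>)\<^sup>2 = (\<Sum>i<n. \<Sum>j<n. X i \<omega> * X j \<omega>)" for \<omega>
    unfolding Sn_def power2_eq_square by (simp add: sum_product)
  have Sn_int: "integrable M (\<lambda>\<omega>. (Sn \<omega>)\<^sup>2)"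
    unfolding Sn_sq using crossint by (intro Bochner_Integration.integrable_sum) auto
  have Sn_E: "(\<integral>\<omega>. (Sn \<omega>)\<^sup>2 \<partial>M) = real n * \<sigma>2"
  proof -
    have "(\<integral>\<omega>. (Sn \<omega>)\<^sup>2 \<partial>M) = (\<Sum>i<n. \<Sum>j<n. \<integral>\<omega>. X i \<omega> * X j \<omega> \<partial>M)"
    proof -
      have "(\<integral>\<omega>. (\<Sum>i<n. \<Sum>j<n. X i \<omega> * X j \<omega>) \<partial>M) = (\<Sum>i<n. \<integral>\<omega>. (\<Sum>j<n. X i \<omega> * X j \<omega>) \<partial>M)"
        by (rule Bochner_Integration.integral_sum[where f="\<lambda>i \<omega>. \<Sum>j<n. X i \<omega> * X j \<omega>"]) (use crossint in auto)
      also have "\<dots> = (\<Sum>i<n. \<Sum>j<n. \<integral>\<omega>. X i \<omega> * X j \<omega> \<partial>M)"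
        by (intro sum.cong refl Bochner_Integration.integral_sum[where f="\<lambda>j \<omega>. X _ \<omega> * X j \<omega>"]) (use crossint in auto)
      finally show ?thesis unfolding Sn_sq .
    qed
    also have "\<dots> = (\<Sum>i<n. \<sigma>2)" unfolding cross by (simp add: sum.delta)
    finally show ?thesis by simp
  qed
  have avg: "(\<Sum>i<n. h (U i \<omega>)) / real n - \<mu> = Sn \<omega> / real n" for \<omega>
  proof -
    have "Sn \<omega> = (\<Sum>i<n. h (U i \<omega>)) - real n * \<mu>" by (simp add: Sn_def X_def sum_subtractf)
    then show ?thesis using npos by (simp add: diff_divide_distrib)
  qed
  have "{\<omega>\<in>space M. \<epsilon> \<le> \<bar>(\<Sum>i<n. h (U i \<omega>)) / real n - \<mu>\<bar>} = {\<omega>\<in>space M. (real n * \<epsilon>)\<^sup>2 \<le> (Sn \<omega>)\<^sup>2}"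
  proof -
    have "\<epsilon> \<le> \<bar>Sn \<omega> / real n\<bar> \<longleftrightarrow> real n * \<epsilon> \<le> \<bar>Sn \<omega>\<bar>" for \<omega>
      using npos by (simp add: pos_le_divide_eq mult.commute)
    moreover have "real n * \<epsilon> \<le> \<bar>Sn \<omega>\<bar> \<longleftrightarrow> (real n * \<epsilon>)\<^sup>2 \<le> (Sn \<omega>)\<^sup>2" for \<omega>
    proof -
      have "0 \<le> real n * \<epsilon>" using npos eps by simp
      then show ?thesis using abs_le_square_iff[of "real n * \<epsilon>" "Sn \<omega>"] by simp
    qed
    ultimately show ?thesis unfolding avg by auto
  qed
  also have "measure M \<dots> \<le> (\<integral>\<omega>. (Sn \<omega>)\<^sup>2 \<partial>M) / (real n * \<epsilon>)\<^sup>2"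
    by (rule integral_Markov_inequality_measure[OF Sn_int, where A="space M"]) (use npos eps in auto)
  also have "\<dots> = \<sigma>2 / (real n * \<epsilon>\<^sup>2)"
  proof -
    have "real n * \<sigma>2 / (real n * \<epsilon>)\<^sup>2 = (real n * \<sigma>2) / (real n * (real n * \<epsilon>\<^sup>2))"
      by (simp add: power2_eq_square mult.assoc)
    also have "\<dots> = \<sigma>2 / (real n * \<epsilon>\<^sup>2)" using npos by simp
    finally show ?thesis unfolding Sn_E .
  qed
  finally show ?thesis unfolding \<mu>_def \<sigma>2_def .
qed


lemma wlln:
  fixes h :: "'b \<Rightarrow> real"
  assumes U: "\<And>i. U i \<in> measurable M N"
    and indep: "indep_vars (\<lambda>_. N) U UNIV"
    and dist: "\<And>i. distr M N (U i) = distr M N (U 0)"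
    and h: "h \<in> borel_measurable N"
    and sq: "integrable M (\<lambda>\<omega>. (h (U 0 \<omega>))\<^sup>2)"
  shows "conv_prob M (\<lambda>n \<omega>. (\<Sum>i<n. h (U i \<omega>)) / real n) (\<integral>\<omega>. h (U 0 \<omega>) \<partial>M)"
  unfolding conv_prob_def
proof (intro allI impI)
  fix \<epsilon> :: real assume e: "0 < \<epsilon>"
  define \<mu> where "\<mu> = (\<integral>\<omega>. h (U 0 \<omega>) \<partial>M)"
  define \<sigma>2 where "\<sigma>2 = (\<integral>\<omega>. (h (U 0 \<omega>) - \<mu>)\<^sup>2 \<partial>M)"
  define A where "A n = {\<omega>\<in>space M. \<epsilon> \<le> \<bar>(\<Sum>i<n. h (U i \<omega>)) / real n - \<mu>\<bar>}" for n
  have hU[measurable]: "(\<lambda>\<omega>. h (U i \<omega>)) \<in> borel_measurable M" for i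
    using measurable_compose[OF U h] by (simp add: comp_def)
  have Am: "A n \<in> sets M" for n unfolding A_def by measurable
  have bound: "measure M (A n) \<le> \<sigma>2 / (real n * \<epsilon>\<^sup>2)" if "0 < n" for n
    unfolding A_def \<mu>_def \<sigma>2_def by (rule wlln_bound[OF U indep dist h sq e that])
  have lim: "(\<lambda>n. \<sigma>2 / (real n * \<epsilon>\<^sup>2)) \<longlonglongrightarrow> 0"
  proof -
    have "(\<lambda>n. (\<sigma>2 / \<epsilon>\<^sup>2) * inverse (real n)) \<longlonglongrightarrow> (\<sigma>2 / \<epsilon>\<^sup>2) * 0"
      by (intro tendsto_mult tendsto_const lim_inverse_n)
    then show ?thesis by (simp add: field_simps)
  qed
  have "(\<lambda>n. measure M (A n)) \<longlonglongrightarrow> 0"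
  proof (rule tendsto_sandwich[OF _ _ tendsto_const lim])
    show "\<forall>\<^sub>F n in sequentially. 0 \<le> measure M (A n)" by simp
    show "\<forall>\<^sub>F n in sequentially. measure M (A n) \<le> \<sigma>2 / (real n * \<epsilon>\<^sup>2)"
      using eventually_gt_at_top[of 0] by eventually_elim (rule bound)
  qed
  moreover have "{\<omega>\<in>space M. \<epsilon> < \<bar>(\<Sum>i<n. h (U i \<omega>)) / real n - \<mu>\<bar>} \<subseteq> A n" for n
    unfolding A_def by auto
  ultimately show "\<exists>A. (\<forall>n. A n \<in> sets M \<and> {\<omega>\<in>space M. \<epsilon> < \<bar>(\<Sum>i<n. h (U i \<omega>)) / real n - (\<integral>\<omega>. h (U 0 \<omega>) \<partial>M)\<bar>} \<subseteq> A n)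
     \<and> (\<lambda>n. measure M (A n)) \<longlonglongrightarrow> 0"
    using Am unfolding \<mu>_def by blast
qed

end

definition "cellI s q x = (if fst x = s \<and> fst (snd x) = q then 1 else (0::real))"
definition "cellD s q \<sigma> t t0 x = (if fst x = s \<and> fst (snd x) = q then snd (snd x) (\<sigma>,t) - snd (snd x) (\<sigma>,t0) else (0::real))"

lemma sum_if_card: fixes n :: nat shows "(\<Sum>i<n. if P i then 1 else (0::real)) = real (card {i. i < n \<and> P i})"
proof -
  have "(\<Sum>i<n. if P i then 1 else (0::real)) = (\<Sum>i\<in>{i\<in>{..<n}. P i}. 1)"
    by (rule sum.inter_filter[symmetric]) simp
  also have "{i\<in>{..<n}. P i} = {i. i < n \<and> P i}" by auto
  finally show ?thesis by simp
qed

lemma conv_prob_prod: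
  assumes "finite I" "\<And>i. i \<in> I \<Longrightarrow> conv_prob M (X i) (c i)"
  shows "conv_prob M (\<lambda>n \<omega>. \<Prod>i\<in>I. X i n \<omega>) (\<Prod>i\<in>I. c i)"
  using assms
proof (induction I rule: finite_induct)
  case empty then show ?case by (simp add: conv_prob_const)
next
  case (insert x F)
  have "conv_prob M (\<lambda>n \<omega>. X x n \<omega> * (\<Prod>i\<in>F. X i n \<omega>)) (c x * prod c F)"
    by (rule conv_prob_mult) (use insert in auto)
  then show ?case using insert.hyps by simp
qed

locale ddd = prob_space M for M :: "'a measure" +
  fixes T L K :: nat and SS :: "enat set" and gc :: "nat \<Rightarrow> enat"
    and Sv :: "nat \<Rightarrow> 'a \<Rightarrow> enat" and Qv :: "nat \<Rightarrow> 'a \<Rightarrow> bool"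
    and Yp :: "nat \<Rightarrow> 'a \<Rightarrow> enat \<Rightarrow> nat \<Rightarrow> real"
  assumes SSsub: "SS \<subseteq> enat ` {2..T} \<union> {\<infinity>}"
    and gc: "\<forall>g\<in>Gtrg SS. gc g \<in> SS \<and> enat (g + K) < gc g"
    and Um: "\<And>i. unit_rv T SS Sv Qv Yp i \<in> measurable M (unit_space T SS)"
    and indep: "indep_vars (\<lambda>_. unit_space T SS) (unit_rv T SS Sv Qv Yp) UNIV"
    and idist: "\<And>i. distr M (unit_space T SS) (unit_rv T SS Sv Qv Yp i)
              = distr M (unit_space T SS) (unit_rv T SS Sv Qv Yp 0)"
    and mom: "\<forall>g\<in>insert \<infinity> SS. \<forall>t\<in>{1..T}. integrable M (\<lambda>\<omega>. (Yp 0 \<omega> g t)\<^sup>2)"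
    and noant: "AE \<omega> in M. \<forall>g\<in>Gtrg SS. \<forall>t. t < g \<longrightarrow> Yp 0 \<omega> (enat g) t = Yp 0 \<omega> \<infinity> t"
    and pct: "\<forall>g\<in>Gtrg SS. \<forall>g'\<in>SS. \<forall>t. enat g < g' \<and> 2 \<le> t \<and> t \<le> T \<and> enat t \<le> g' \<longrightarrow>
           Delta_trend M Sv Qv Yp t (enat g) True - Delta_trend M Sv Qv Yp t (enat g) False
         = Delta_trend M Sv Qv Yp t g' True - Delta_trend M Sv Qv Yp t g' False"
    and adm: "\<forall>g\<in>Gtrg SS. \<forall>s\<in>{enat g, gc g}. \<forall>q.
           0 < measure M {\<omega>\<in>space M. Sv 0 \<omega> = s \<and> Qv 0 \<omega> = q}"
begin

abbreviation "N \<equiv> unit_space T SS"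
abbreviation "U \<equiv> unit_rv T SS Sv Qv Yp"
abbreviation "Iy \<equiv> insert \<infinity> SS \<times> {1..T}"

lemma Gtrg_sub: "Gtrg SS \<subseteq> {2..T}"
  using SSsub unfolding Gtrg_def by auto

lemma finG: "finite (Gtrg SS)"
  using Gtrg_sub by (rule finite_subset) simp

lemma gcne: "\<forall>g\<in>Gtrg SS. gc g \<noteq> enat g"
  using gc by auto

lemma Sv_meas[measurable]: "Sv i \<in> measurable M (count_space UNIV)"
proof -
  have "(\<lambda>\<omega>. fst (U i \<omega>)) \<in> measurable M (count_space UNIV)"
    using Um[of i] unfolding unit_space_def by measurable
  then show ?thesis by (simp add: unit_rv_def)
qed

lemma Qv_meas[measurable]: "Qv i \<in> measurable M (count_space UNIV)"
proof -
  have "(\<lambda>\<omega>. fst (snd (U i \<omega>))) \<in> measurable M (count_space UNIV)"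
    using Um[of i] unfolding unit_space_def by measurable
  then show ?thesis by (simp add: unit_rv_def)
qed

lemma Yp_meas:
  assumes "s \<in> insert \<infinity> SS" "t \<in> {1..T}"
  shows "(\<lambda>\<omega>. Yp i \<omega> s t) \<in> borel_measurable M"
proof -
  have "(\<lambda>\<omega>. snd (snd (U i \<omega>))) \<in> measurable M (PiM Iy (\<lambda>_. borel))"
    using Um[of i] unfolding unit_space_def by measurable
  moreover have "(\<lambda>x. x (s,t)) \<in> measurable (PiM Iy (\<lambda>_. borel)) borel"
    using assms by (intro measurable_component_singleton) auto
  ultimately have "(\<lambda>\<omega>. snd (snd (U i \<omega>)) (s,t)) \<in> borel_measurable M"
    by (rule measurable_compose)
  then show ?thesis using assms by (simp add: unit_rv_def)
qed

lemma cset_meas[measurable]: "{\<omega>\<in>space M. Sv i \<omega> = s \<and> Qv i \<omega> = q} \<in> sets M"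
  by measurable


lemma cellI_meas: "cellI s q \<in> borel_measurable N"
  unfolding cellI_def unit_space_def by measurable

lemma cellI_U: "cellI s q (U i \<omega>) = (if Sv i \<omega> = s \<and> Qv i \<omega> = q then 1 else 0)"
  by (simp add: cellI_def unit_rv_def)

lemma freq:
  "conv_prob M (\<lambda>n \<omega>. real (cell_n n (\<lambda>i. Sv i \<omega>) (\<lambda>i. Qv i \<omega>) s q) / real n)
      (measure M {\<omega>\<in>space M. Sv 0 \<omega> = s \<and> Qv 0 \<omega> = q})"
proof -
  have sq: "integrable M (\<lambda>\<omega>. (cellI s q (U 0 \<omega>))\<^sup>2)"
  proof -
    have "integrable M (\<lambda>\<omega>. indicator {\<omega>\<in>space M. Sv 0 \<omega> = s \<and> Qv 0 \<omega> = q} \<omega> *\<^sub>R (1::real))"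
      by (intro integrable_indicator) (auto simp: emeasure_eq_measure)
    then show ?thesis
      by (rule Bochner_Integration.integrable_cong[THEN iffD1, rotated -1]) (auto simp: cellI_U indicator_def)
  qed
  note w = wlln[OF Um indep idist cellI_meas sq]
  have E: "(\<integral>\<omega>. cellI s q (U 0 \<omega>) \<partial>M) = measure M {\<omega>\<in>space M. Sv 0 \<omega> = s \<and> Qv 0 \<omega> = q}"
  proof -
    have "(\<integral>\<omega>. cellI s q (U 0 \<omega>) \<partial>M) = (\<integral>\<omega>. indicator {\<omega>\<in>space M. Sv 0 \<omega> = s \<and> Qv 0 \<omega> = q} \<omega> \<partial>M)"
      by (intro Bochner_Integration.integral_cong) (auto simp: cellI_U indicator_def)
    also have "\<dots> = measure M {\<omega>\<in>space M. Sv 0 \<omega> = s \<and> Qv 0 \<omega> = q}"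
      by simp
    finally show ?thesis .
  qed
  have S: "(\<Sum>i<n. cellI s q (U i \<omega>)) = real (cell_n n (\<lambda>i. Sv i \<omega>) (\<lambda>i. Qv i \<omega>) s q)" for n \<omega>
    unfolding cellI_U cell_n_def by (rule sum_if_card)
  show ?thesis using w unfolding E S .
qed

lemma cellD_meas:
  assumes "\<sigma> \<in> insert \<infinity> SS" "t \<in> {1..T}" "t0 \<in> {1..T}"
  shows "cellD s q \<sigma> t t0 \<in> borel_measurable N"
proof -
  have "(\<lambda>x. x (\<sigma>,t)) \<in> measurable (PiM Iy (\<lambda>_. borel)) borel"
       "(\<lambda>x. x (\<sigma>,t0)) \<in> measurable (PiM Iy (\<lambda>_. borel)) borel"
    using assms by (intro measurable_component_singleton; auto)+
  note [measurable] = this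
  show ?thesis unfolding cellD_def unit_space_def by measurable
qed

lemma cellD_U:
  assumes "\<sigma> \<in> insert \<infinity> SS" "t \<in> {1..T}" "t0 \<in> {1..T}"
  shows "cellD s q \<sigma> t t0 (U i \<omega>) = (if Sv i \<omega> = s \<and> Qv i \<omega> = q then Yp i \<omega> \<sigma> t - Yp i \<omega> \<sigma> t0 else 0)"
  using assms by (simp add: cellD_def unit_rv_def)

lemma Yp_int:
  assumes "s \<in> insert \<infinity> SS" "t \<in> {1..T}"
  shows "integrable M (\<lambda>\<omega>. Yp 0 \<omega> s t)"
proof (rule square_integrable_imp_integrable)
  show "(\<lambda>\<omega>. Yp 0 \<omega> s t) \<in> borel_measurable M" by (rule Yp_meas[OF assms])
  show "integrable M (\<lambda>\<omega>. (Yp 0 \<omega> s t)\<^sup>2)" using mom assms by blast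
qed

lemma cellsum:
  assumes a: "\<sigma> \<in> insert \<infinity> SS" "t \<in> {1..T}" "t0 \<in> {1..T}"
  shows "conv_prob M (\<lambda>n \<omega>. (\<Sum>i<n. cellD s q \<sigma> t t0 (U i \<omega>)) / real n) (\<integral>\<omega>. cellD s q \<sigma> t t0 (U 0 \<omega>) \<partial>M)"
proof -
  have m1[measurable]: "(\<lambda>\<omega>. Yp 0 \<omega> \<sigma> t) \<in> borel_measurable M" "(\<lambda>\<omega>. Yp 0 \<omega> \<sigma> t0) \<in> borel_measurable M"
    using Yp_meas a by auto
  have sq: "integrable M (\<lambda>\<omega>. (cellD s q \<sigma> t t0 (U 0 \<omega>))\<^sup>2)"
  proof (rule Bochner_Integration.integrable_bound)
    show "integrable M (\<lambda>\<omega>. 2 * (Yp 0 \<omega> \<sigma> t)\<^sup>2 + 2 * (Yp 0 \<omega> \<sigma> t0)\<^sup>2)"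
      using mom a by auto
    show "(\<lambda>\<omega>. (cellD s q \<sigma> t t0 (U 0 \<omega>))\<^sup>2) \<in> borel_measurable M"
    proof -
      have "(\<lambda>\<omega>. cellD s q \<sigma> t t0 (U 0 \<omega>)) \<in> borel_measurable M"
        using measurable_compose[OF Um cellD_meas[OF a]] by (simp add: comp_def)
      then show ?thesis by (rule borel_measurable_power)
    qed
    show "AE \<omega> in M. norm ((cellD s q \<sigma> t t0 (U 0 \<omega>))\<^sup>2) \<le> norm (2 * (Yp 0 \<omega> \<sigma> t)\<^sup>2 + 2 * (Yp 0 \<omega> \<sigma> t0)\<^sup>2)"
    proof (intro AE_I2)
      fix \<omega>
      have "(Yp 0 \<omega> \<sigma> t - Yp 0 \<omega> \<sigma> t0)\<^sup>2 \<le> 2 * (Yp 0 \<omega> \<sigma> t)\<^sup>2 + 2 * (Yp 0 \<omega> \<sigma> t0)\<^sup>2"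
        using zero_le_square[of "Yp 0 \<omega> \<sigma> t + Yp 0 \<omega> \<sigma> t0"] by (simp add: power2_eq_square algebra_simps)
      then show "norm ((cellD s q \<sigma> t t0 (U 0 \<omega>))\<^sup>2) \<le> norm (2 * (Yp 0 \<omega> \<sigma> t)\<^sup>2 + 2 * (Yp 0 \<omega> \<sigma> t0)\<^sup>2)"
        unfolding cellD_U[OF a] by auto
    qed
  qed
  show ?thesis by (rule wlln[OF Um indep idist cellD_meas[OF a] sq])
qed


definition "ceq s q t g = cond_exp_cell M Sv Qv (\<lambda>\<omega>. Yobs SS s q (Yp 0 \<omega>) t - Yobs SS s q (Yp 0 \<omega>) (g - 1)) s q"

definition "Dlim g t = (ceq (enat g) True t g - ceq (enat g) False t g) - (ceq (gc g) True t g - ceq (gc g) False t g)"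

definition "Yw \<omega> = (\<lambda>i t. Yobs SS (Sv i \<omega>) (Qv i \<omega>) (Yp i \<omega>) t)"

lemma pcell_pos: "g \<in> Gtrg SS \<Longrightarrow> s \<in> {enat g, gc g} \<Longrightarrow> 0 < measure M {\<omega>\<in>space M. Sv 0 \<omega> = s \<and> Qv 0 \<omega> = q}"
  using adm by blast

lemma cm_conv:
  assumes g: "g \<in> Gtrg SS" and s: "s \<in> {enat g, gc g}" and t: "t \<in> {1..T}"
  shows "conv_prob M (\<lambda>n \<omega>. cell_mean n (\<lambda>i. Sv i \<omega>) (\<lambda>i. Qv i \<omega>) (Yw \<omega>) g s q t) (ceq s q t g)"
proof -
  define \<sigma> where "\<sigma> = (if s \<noteq> \<infinity> \<and> s \<in> SS \<and> q then s else \<infinity>)"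
  have \<sigma>: "\<sigma> \<in> insert \<infinity> SS" by (auto simp: \<sigma>_def)
  have g2: "g \<in> {2..T}" using g Gtrg_sub by auto
  have t0: "g - 1 \<in> {1..T}" using g2 by auto
  have Yo: "Yobs SS s q y u = y \<sigma> u" for y u by (simp add: Yobs_def \<sigma>_def)
  define p where "p = measure M {\<omega>\<in>space M. Sv 0 \<omega> = s \<and> Qv 0 \<omega> = q}"
  have p: "p \<noteq> 0" using pcell_pos[OF g s, of q] by (simp add: p_def)
  note c1 = conv_prob_divide[OF cellsum[OF \<sigma> t t0, of s q] freq[of s q], folded p_def, OF p]
  have eq: "(\<Sum>i<n. cellD s q \<sigma> t (g - 1) (U i \<omega>)) / real n / (real (cell_n n (\<lambda>i. Sv i \<omega>) (\<lambda>i. Qv i \<omega>) s q) / real n)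
      = cell_mean n (\<lambda>i. Sv i \<omega>) (\<lambda>i. Qv i \<omega>) (Yw \<omega>) g s q t" for n \<omega>
  proof -
    have "(\<Sum>i<n. cellD s q \<sigma> t (g - 1) (U i \<omega>)) = (\<Sum>i<n. if Sv i \<omega> = s \<and> Qv i \<omega> = q then dY (Yw \<omega>) i t g else 0)"
      unfolding cellD_U[OF \<sigma> t t0] by (rule sum.cong) (auto simp: dY_def Yw_def Yo)
    also have "\<dots> = (\<Sum>i\<in>{i\<in>{..<n}. Sv i \<omega> = s \<and> Qv i \<omega> = q}. dY (Yw \<omega>) i t g)"
      by (rule sum.inter_filter[symmetric]) simp
    also have "{i\<in>{..<n}. Sv i \<omega> = s \<and> Qv i \<omega> = q} = {i. i < n \<and> Sv i \<omega> = s \<and> Qv i \<omega> = q}" by auto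
    finally have A: "(\<Sum>i<n. cellD s q \<sigma> t (g - 1) (U i \<omega>)) = (\<Sum>i\<in>{i. i < n \<and> Sv i \<omega> = s \<and> Qv i \<omega> = q}. dY (Yw \<omega>) i t g)" .
    show ?thesis
    proof (cases "n = 0")
      case True then show ?thesis by (simp add: cell_mean_def cell_n_def)
    next
      case False then show ?thesis unfolding A by (simp add: cell_mean_def)
    qed
  qed
  have lim: "(\<integral>\<omega>. cellD s q \<sigma> t (g - 1) (U 0 \<omega>) \<partial>M) / p = ceq s q t g"
  proof -
    have "(\<integral>\<omega>. cellD s q \<sigma> t (g - 1) (U 0 \<omega>) \<partial>M)
        = (\<integral>\<omega>. (Yobs SS s q (Yp 0 \<omega>) t - Yobs SS s q (Yp 0 \<omega>) (g - 1)) * indicator {\<omega>\<in>space M. Sv 0 \<omega> = s \<and> Qv 0 \<omega> = q} \<omega> \<partial>M)"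
      unfolding cellD_U[OF \<sigma> t t0] by (intro Bochner_Integration.integral_cong) (auto simp: Yo indicator_def)
    then show ?thesis by (simp add: ceq_def cond_exp_cell_def p_def)
  qed
  show ?thesis using c1 unfolding eq lim .
qed

lemma tau_sat_conv:
  assumes g: "g \<in> Gtrg SS" and t: "t \<in> {1..T}"
  shows "conv_prob M (\<lambda>n \<omega>. tau_sat gc n (\<lambda>i. Sv i \<omega>) (\<lambda>i. Qv i \<omega>) (Yw \<omega>) g t) (Dlim g t)"
  unfolding tau_sat_def Dlim_def
  by (intro conv_prob_diff cm_conv[OF g _ t]) auto


definition "pc s q = measure M {\<omega>\<in>space M. Sv 0 \<omega> = s \<and> Qv 0 \<omega> = q}"
definition "Vstar g = inverse (1 / pc (enat g) True + 1 / pc (enat g) False + 1 / pc (gc g) True + 1 / pc (gc g) False)"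
definition "wstar e g = Vstar g / (\<Sum>g'\<in>Gtrg_e T SS e. Vstar g')"
definition "fr n \<omega> s q = real (cell_n n (\<lambda>i. Sv i \<omega>) (\<lambda>i. Qv i \<omega>) s q) / real n"
definition "Vt n \<omega> g = inverse (inverse (fr n \<omega> (enat g) True) + inverse (fr n \<omega> (enat g) False)
                               + inverse (fr n \<omega> (gc g) True) + inverse (fr n \<omega> (gc g) False))"

lemma pc_pos: "g \<in> Gtrg SS \<Longrightarrow> s \<in> {enat g, gc g} \<Longrightarrow> 0 < pc s q"
  unfolding pc_def by (rule pcell_pos)

lemma H_pos: "g \<in> Gtrg SS \<Longrightarrow> 0 < 1 / pc (enat g) True + 1 / pc (enat g) False + 1 / pc (gc g) True + 1 / pc (gc g) False"
  using pc_pos[of g "enat g" True] pc_pos[of g "enat g" False] pc_pos[of g "gc g" True] pc_pos[of g "gc g" False]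
  by (intro add_pos_pos) auto

lemma Vstar_pos: "g \<in> Gtrg SS \<Longrightarrow> 0 < Vstar g"
  unfolding Vstar_def using H_pos by simp

lemma Vt_conv: "g \<in> Gtrg SS \<Longrightarrow> conv_prob M (\<lambda>n \<omega>. Vt n \<omega> g) (Vstar g)"
proof -
  assume g: "g \<in> Gtrg SS"
  have fr: "conv_prob M (\<lambda>n \<omega>. inverse (fr n \<omega> s q)) (1 / pc s q)" if "s \<in> {enat g, gc g}" for s q
  proof -
    have "conv_prob M (\<lambda>n \<omega>. inverse (fr n \<omega> s q)) (inverse (pc s q))"
      by (rule conv_prob_inverse) (use freq[of s q] pcell_pos[OF g that, of q] in \<open>auto simp: fr_def pc_def\<close>)
    then show ?thesis by (simp add: divide_inverse)
  qed
  note H = H_pos[OF g]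
  show ?thesis unfolding Vt_def Vstar_def
    by (rule conv_prob_inverse) (use H in \<open>auto intro!: conv_prob_add fr\<close>)
qed

lemma w_eq: "w_fwl T SS gc n (\<lambda>i. Sv i \<omega>) (\<lambda>i. Qv i \<omega>) e g = Vt n \<omega> g / (\<Sum>g'\<in>Gtrg_e T SS e. Vt n \<omega> g')"
proof (cases "n = 0")
  case True
  then show ?thesis by (simp add: w_fwl_def V_stack_def Vt_def fr_def cell_n_def)
next
  case False
  have inv: "inverse (fr n \<omega> s q) = real n * (1 / real (cell_n n (\<lambda>i. Sv i \<omega>) (\<lambda>i. Qv i \<omega>) s q))" for s q
    by (simp add: fr_def)
  have Vt: "Vt n \<omega> g' = inverse (real n) * V_stack gc n (\<lambda>i. Sv i \<omega>) (\<lambda>i. Qv i \<omega>) g'" for g'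
  proof -
    have gen: "inverse (x*a + x*b + x*c + x*d) = inverse x * inverse (a+b+c+d)" for x a b c d :: real
    proof -
      have "x*a + x*b + x*c + x*d = x * (a+b+c+d)" by (simp add: algebra_simps)
      then show ?thesis by (simp add: inverse_mult_distrib)
    qed
    show ?thesis unfolding Vt_def inv V_stack_def by (rule gen)
  qed
  have "Vt n \<omega> g / (\<Sum>g'\<in>Gtrg_e T SS e. Vt n \<omega> g')
      = (inverse (real n) * V_stack gc n (\<lambda>i. Sv i \<omega>) (\<lambda>i. Qv i \<omega>) g) / (inverse (real n) * (\<Sum>g'\<in>Gtrg_e T SS e. V_stack gc n (\<lambda>i. Sv i \<omega>) (\<lambda>i. Qv i \<omega>) g'))"
    unfolding Vt by (simp add: sum_distrib_left)
  also have "\<dots> = w_fwl T SS gc n (\<lambda>i. Sv i \<omega>) (\<lambda>i. Qv i \<omega>) e g"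
    using False by (simp add: w_fwl_def)
  finally show ?thesis ..
qed

lemma finGe: "finite (Gtrg_e T SS e)"
  using finG unfolding Gtrg_e_def by auto

lemma w_conv:
  assumes g: "g \<in> Gtrg_e T SS e"
  shows "conv_prob M (\<lambda>n \<omega>. w_fwl T SS gc n (\<lambda>i. Sv i \<omega>) (\<lambda>i. Qv i \<omega>) e g) (wstar e g)"
proof -
  have sub: "Gtrg_e T SS e \<subseteq> Gtrg SS" by (auto simp: Gtrg_e_def)
  have sp: "0 < (\<Sum>g'\<in>Gtrg_e T SS e. Vstar g')"
    using g sub finGe by (intro sum_pos) (auto intro: Vstar_pos)
  have "conv_prob M (\<lambda>n \<omega>. Vt n \<omega> g / (\<Sum>g'\<in>Gtrg_e T SS e. Vt n \<omega> g')) (wstar e g)"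
    unfolding wstar_def
    by (rule conv_prob_divide) (use g sub sp in \<open>auto intro!: Vt_conv conv_prob_sum finGe\<close>)
  then show ?thesis unfolding w_eq .
qed

lemma wstar_props:
  assumes ne: "Gtrg_e T SS e \<noteq> {}"
  shows "(\<forall>g\<in>Gtrg_e T SS e. 0 < wstar e g) \<and> (\<Sum>g\<in>Gtrg_e T SS e. wstar e g) = 1"
proof -
  have sub: "Gtrg_e T SS e \<subseteq> Gtrg SS" by (auto simp: Gtrg_e_def)
  have sp: "0 < (\<Sum>g'\<in>Gtrg_e T SS e. Vstar g')"
    using ne sub finGe by (intro sum_pos) (auto intro: Vstar_pos)
  show ?thesis using sp sub Vstar_pos unfolding wstar_def by (auto simp: sum_divide_distrib[symmetric])
qed


definition "CI = (\<Union>g\<in>Gtrg SS. {enat g, gc g}) \<times> (UNIV :: bool set)"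

lemma finite_CI: "finite CI"
  unfolding CI_def using finG by (intro finite_cartesian_product) auto

lemma CI_pos: "x \<in> CI \<Longrightarrow> 0 < pc (fst x) (snd x)"
  unfolding CI_def using pc_pos by auto

lemma good_event:
  assumes pos: "0 < (\<Prod>x\<in>CI. fr n \<omega> (fst x) (snd x))"
  shows "\<forall>g\<in>Gtrg SS. \<forall>s\<in>{enat g, gc g}. \<forall>q. 0 < cell_n n (\<lambda>i. Sv i \<omega>) (\<lambda>i. Qv i \<omega>) s q"
proof (intro ballI allI)
  fix g s q assume g: "g \<in> Gtrg SS" and s: "s \<in> {enat g, gc g}"
  have x: "(s, q) \<in> CI" using g s unfolding CI_def by auto
  have "fr n \<omega> s q \<noteq> 0"
  proof
    assume "fr n \<omega> s q = 0"
    then have "(\<Prod>x\<in>CI. fr n \<omega> (fst x) (snd x)) = 0"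
      using x finite_CI by (intro prod_zero) force+
    then show False using pos by simp
  qed
  then show "0 < cell_n n (\<lambda>i. Sv i \<omega>) (\<lambda>i. Qv i \<omega>) s q" by (auto simp: fr_def)
qed

lemma ols_tau_good:
  assumes e: "e \<in> event_times L K" and ne: "Gtrg_e T SS e \<noteq> {}"
    and cp: "\<forall>g\<in>Gtrg SS. \<forall>s\<in>{enat g, gc g}. \<forall>q. 0 < cell_n n (\<lambda>i. Sv i \<omega>) (\<lambda>i. Qv i \<omega>) s q"
  shows "ols_tau T L K SS gc n (\<lambda>i. Sv i \<omega>) (\<lambda>i. Qv i \<omega>) (Yw \<omega>) e
       = (\<Sum>g\<in>Gtrg_e T SS e. w_fwl T SS gc n (\<lambda>i. Sv i \<omega>) (\<lambda>i. Qv i \<omega>) e g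
                * tau_sat gc n (\<lambda>i. Sv i \<omega>) (\<lambda>i. Qv i \<omega>) (Yw \<omega>) g (nat (int g + e)))"
proof -
  note A = partA_ctx[where T=T and L=L and K=K and SS=SS and gc=gc and n=n and S="\<lambda>i. Sv i \<omega>"
       and Q="\<lambda>i. Qv i \<omega>" and Y="Yw \<omega>", OF finG cp gcne e ne]
  define p where "p = (SOME p. is_ols T L K SS gc n (\<lambda>i. Sv i \<omega>) (\<lambda>i. Qv i \<omega>) (Yw \<omega>) p)"
  obtain p0 where p0: "is_ols T L K SS gc n (\<lambda>i. Sv i \<omega>) (\<lambda>i. Qv i \<omega>) (Yw \<omega>) p0"
    using A[THEN conjunct1] by blast
  have p: "is_ols T L K SS gc n (\<lambda>i. Sv i \<omega>) (\<lambda>i. Qv i \<omega>) (Yw \<omega>) p"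
    unfolding p_def by (rule someI[of _ p0]) (rule p0)
  obtain lam eta tau where pe: "p = (lam, eta, tau)" by (cases p) auto
  note A2 = A[THEN conjunct2, THEN conjunct1]
  have "tau e = (\<Sum>g\<in>Gtrg_e T SS e. w_fwl T SS gc n (\<lambda>i. Sv i \<omega>) (\<lambda>i. Qv i \<omega>) e g
                * tau_sat gc n (\<lambda>i. Sv i \<omega>) (\<lambda>i. Qv i \<omega>) (Yw \<omega>) g (nat (int g + e)))"
    using A2 p unfolding pe by blast
  moreover have "ols_tau T L K SS gc n (\<lambda>i. Sv i \<omega>) (\<lambda>i. Qv i \<omega>) (Yw \<omega>) e = tau e"
    unfolding ols_tau_def p_def[symmetric] pe by simp
  ultimately show ?thesis by simp
qed

lemma Ysum_conv:
  assumes e: "e \<in> event_times L K"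
  shows "conv_prob M (\<lambda>n \<omega>. \<Sum>g\<in>Gtrg_e T SS e. w_fwl T SS gc n (\<lambda>i. Sv i \<omega>) (\<lambda>i. Qv i \<omega>) e g
                * tau_sat gc n (\<lambda>i. Sv i \<omega>) (\<lambda>i. Qv i \<omega>) (Yw \<omega>) g (nat (int g + e)))
           (\<Sum>g\<in>Gtrg_e T SS e. wstar e g * Dlim g (nat (int g + e)))"
proof (rule conv_prob_sum[OF finGe])
  fix g assume g: "g \<in> Gtrg_e T SS e"
  have g': "g \<in> Gtrg SS" "nat (int g + e) \<in> {1..T}" using g by (auto simp: Gtrg_e_def)
  show "conv_prob M (\<lambda>n \<omega>. w_fwl T SS gc n (\<lambda>i. Sv i \<omega>) (\<lambda>i. Qv i \<omega>) e g
                * tau_sat gc n (\<lambda>i. Sv i \<omega>) (\<lambda>i. Qv i \<omega>) (Yw \<omega>) g (nat (int g + e)))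
           (wstar e g * Dlim g (nat (int g + e)))"
    by (rule conv_prob_mult[OF w_conv[OF g] tau_sat_conv[OF g']])
qed

lemma ols_conv_Dlim:
  assumes e: "e \<in> event_times L K" and ne: "Gtrg_e T SS e \<noteq> {}"
  shows "conv_prob M (\<lambda>n \<omega>. ols_tau T L K SS gc n (\<lambda>i. Sv i \<omega>) (\<lambda>i. Qv i \<omega>) (Yw \<omega>) e)
           (\<Sum>g\<in>Gtrg_e T SS e. wstar e g * Dlim g (nat (int g + e)))"
proof -
  define P0 where "P0 = (\<Prod>x\<in>CI. pc (fst x) (snd x))"
  have P0: "0 < P0" unfolding P0_def using CI_pos by (intro prod_pos) auto
  have cP: "conv_prob M (\<lambda>n \<omega>. \<Prod>x\<in>CI. fr n \<omega> (fst x) (snd x)) P0"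
    unfolding P0_def by (rule conv_prob_prod[OF finite_CI]) (unfold fr_def pc_def, rule freq)
  have P02: "0 < P0 / 2" using P0 by simp
  obtain A where A0: "\<forall>n. A n \<in> sets M \<and> {\<omega>\<in>space M. P0 / 2 < \<bar>(\<Prod>x\<in>CI. fr n \<omega> (fst x) (snd x)) - P0\<bar>} \<subseteq> A n"
     and Al: "(\<lambda>n. measure M (A n)) \<longlonglongrightarrow> 0"
    using cP P02 unfolding conv_prob_def by meson
  show ?thesis
  proof (rule conv_prob_ae_eq[OF Ysum_conv[OF e]])
    show "A n \<in> sets M" for n using A0 by auto
    show "(\<lambda>n. measure M (A n)) \<longlonglongrightarrow> 0" by (rule Al)
    show "{\<omega>\<in>space M. ols_tau T L K SS gc n (\<lambda>i. Sv i \<omega>) (\<lambda>i. Qv i \<omega>) (Yw \<omega>) e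
            \<noteq> (\<Sum>g\<in>Gtrg_e T SS e. w_fwl T SS gc n (\<lambda>i. Sv i \<omega>) (\<lambda>i. Qv i \<omega>) e g
                * tau_sat gc n (\<lambda>i. Sv i \<omega>) (\<lambda>i. Qv i \<omega>) (Yw \<omega>) g (nat (int g + e)))} \<subseteq> A n" for n
    proof clarify
      fix \<omega> assume w: "\<omega> \<in> space M"
        and neq: "ols_tau T L K SS gc n (\<lambda>i. Sv i \<omega>) (\<lambda>i. Qv i \<omega>) (Yw \<omega>) e
            \<noteq> (\<Sum>g\<in>Gtrg_e T SS e. w_fwl T SS gc n (\<lambda>i. Sv i \<omega>) (\<lambda>i. Qv i \<omega>) e g
                * tau_sat gc n (\<lambda>i. Sv i \<omega>) (\<lambda>i. Qv i \<omega>) (Yw \<omega>) g (nat (int g + e)))"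
      show "\<omega> \<in> A n"
      proof (rule ccontr)
        assume "\<omega> \<notin> A n"
        then have "\<bar>(\<Prod>x\<in>CI. fr n \<omega> (fst x) (snd x)) - P0\<bar> \<le> P0 / 2" using A0 w by force
        then have "0 < (\<Prod>x\<in>CI. fr n \<omega> (fst x) (snd x))" using P0 by linarith
        then show False using ols_tau_good[OF e ne good_event] neq by blast
      qed
    qed
  qed
qed


abbreviation "ce X s q \<equiv> cond_exp_cell M Sv Qv X s q"

lemma ce_diff:
  assumes "integrable M X" "integrable M Z"
  shows "ce (\<lambda>\<omega>. X \<omega> - Z \<omega>) s q = ce X s q - ce Z s q"
proof -
  have i: "integrable M (\<lambda>\<omega>. X \<omega> * indicator {\<omega>\<in>space M. Sv 0 \<omega> = s \<and> Qv 0 \<omega> = q} \<omega>)"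
          "integrable M (\<lambda>\<omega>. Z \<omega> * indicator {\<omega>\<in>space M. Sv 0 \<omega> = s \<and> Qv 0 \<omega> = q} \<omega>)"
    using assms by (auto intro!: integrable_real_mult_indicator)
  have "(\<integral>\<omega>. (X \<omega> - Z \<omega>) * indicator {\<omega>\<in>space M. Sv 0 \<omega> = s \<and> Qv 0 \<omega> = q} \<omega> \<partial>M)
      = (\<integral>\<omega>. X \<omega> * indicator {\<omega>\<in>space M. Sv 0 \<omega> = s \<and> Qv 0 \<omega> = q} \<omega>
           - Z \<omega> * indicator {\<omega>\<in>space M. Sv 0 \<omega> = s \<and> Qv 0 \<omega> = q} \<omega> \<partial>M)"
    by (simp add: left_diff_distrib)
  also have "\<dots> = (\<integral>\<omega>. X \<omega> * indicator {\<omega>\<in>space M. Sv 0 \<omega> = s \<and> Qv 0 \<omega> = q} \<omega> \<partial>M)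
           - (\<integral>\<omega>. Z \<omega> * indicator {\<omega>\<in>space M. Sv 0 \<omega> = s \<and> Qv 0 \<omega> = q} \<omega> \<partial>M)"
    using i by (rule Bochner_Integration.integral_diff)
  finally show ?thesis unfolding cond_exp_cell_def by (simp add: diff_divide_distrib)
qed

lemma ce_add:
  assumes "integrable M X" "integrable M Z"
  shows "ce (\<lambda>\<omega>. X \<omega> + Z \<omega>) s q = ce X s q + ce Z s q"
proof -
  have i: "integrable M (\<lambda>\<omega>. X \<omega> * indicator {\<omega>\<in>space M. Sv 0 \<omega> = s \<and> Qv 0 \<omega> = q} \<omega>)"
          "integrable M (\<lambda>\<omega>. Z \<omega> * indicator {\<omega>\<in>space M. Sv 0 \<omega> = s \<and> Qv 0 \<omega> = q} \<omega>)"
    using assms by (auto intro!: integrable_real_mult_indicator)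
  have "(\<integral>\<omega>. (X \<omega> + Z \<omega>) * indicator {\<omega>\<in>space M. Sv 0 \<omega> = s \<and> Qv 0 \<omega> = q} \<omega> \<partial>M)
      = (\<integral>\<omega>. X \<omega> * indicator {\<omega>\<in>space M. Sv 0 \<omega> = s \<and> Qv 0 \<omega> = q} \<omega>
           + Z \<omega> * indicator {\<omega>\<in>space M. Sv 0 \<omega> = s \<and> Qv 0 \<omega> = q} \<omega> \<partial>M)"
    by (simp add: distrib_right)
  also have "\<dots> = (\<integral>\<omega>. X \<omega> * indicator {\<omega>\<in>space M. Sv 0 \<omega> = s \<and> Qv 0 \<omega> = q} \<omega> \<partial>M)
           + (\<integral>\<omega>. Z \<omega> * indicator {\<omega>\<in>space M. Sv 0 \<omega> = s \<and> Qv 0 \<omega> = q} \<omega> \<partial>M)"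
    using i by (rule Bochner_Integration.integral_add)
  finally show ?thesis unfolding cond_exp_cell_def by (simp add: add_divide_distrib)
qed

lemma ce_AE:
  assumes "X \<in> borel_measurable M" "Z \<in> borel_measurable M" "AE \<omega> in M. X \<omega> = Z \<omega>"
  shows "ce X s q = ce Z s q"
proof -
  have "(\<integral>\<omega>. X \<omega> * indicator {\<omega>\<in>space M. Sv 0 \<omega> = s \<and> Qv 0 \<omega> = q} \<omega> \<partial>M)
      = (\<integral>\<omega>. Z \<omega> * indicator {\<omega>\<in>space M. Sv 0 \<omega> = s \<and> Qv 0 \<omega> = q} \<omega> \<partial>M)"
    using assms by (intro integral_cong_AE) auto
  then show ?thesis unfolding cond_exp_cell_def by simp
qed

lemma ident:
  assumes g: "g \<in> Gtrg_e T SS e" and e: "e \<in> event_times L K"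
  shows "Dlim g (nat (int g + e)) = CATT M Sv Qv Yp g e"
proof -
  define t where "t = nat (int g + e)"
  have gG: "g \<in> Gtrg SS" using g by (auto simp: Gtrg_e_def)
  have g2: "2 \<le> g" "g \<le> T" using gG Gtrg_sub by auto
  have eK: "e \<le> int K" using e by (auto simp: event_times_def)
  have t: "1 \<le> t" "t \<le> T" "t \<le> g + K" using g eK by (auto simp: Gtrg_e_def t_def)
  have gS: "enat g \<in> SS" using gG by (simp add: Gtrg_def)
  have gcS: "gc g \<in> SS" and gcl: "enat (g + K) < gc g" using gc gG by auto
  define Yi where "Yi u \<omega> = Yp 0 \<omega> \<infinity> u" for u \<omega>
  have Yi_m: "Yi u \<in> borel_measurable M" if "u \<in> {1..T}" for u
    unfolding Yi_def using Yp_meas[OF _ that, of \<infinity> 0] by simp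
  have Yi_i: "integrable M (Yi u)" if "u \<in> {1..T}" for u
    unfolding Yi_def using Yp_int[OF _ that, of \<infinity>] by simp
  have Yg_m: "(\<lambda>\<omega>. Yp 0 \<omega> (enat g) u) \<in> borel_measurable M" if "u \<in> {1..T}" for u
    using Yp_meas[OF _ that, of "enat g" 0] gS by simp
  have Yg_i: "integrable M (\<lambda>\<omega>. Yp 0 \<omega> (enat g) u)" if "u \<in> {1..T}" for u
    using Yp_int[OF _ that, of "enat g"] gS by simp
  have t1: "t \<in> {1..T}" and g1: "g - 1 \<in> {1..T}" using t g2 by auto
  define F where "F u = ce (Yi u) (enat g) True - ce (Yi u) (enat g) False - ce (Yi u) (gc g) True + ce (Yi u) (gc g) False" for u
  have c1: "ceq (enat g) True t g = CATT M Sv Qv Yp g e + (ce (Yi t) (enat g) True - ce (Yi (g - 1)) (enat g) True)"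
  proof -
    have "ceq (enat g) True t g = ce (\<lambda>\<omega>. Yp 0 \<omega> (enat g) t - Yp 0 \<omega> (enat g) (g - 1)) (enat g) True"
      unfolding ceq_def using gS by (simp add: Yobs_def)
    also have "\<dots> = ce (\<lambda>\<omega>. (Yp 0 \<omega> (enat g) t - Yi t \<omega>) + (Yi t \<omega> - Yi (g - 1) \<omega>)) (enat g) True"
    proof (rule ce_AE)
      show "(\<lambda>\<omega>. Yp 0 \<omega> (enat g) t - Yp 0 \<omega> (enat g) (g - 1)) \<in> borel_measurable M"
        using Yg_m[OF t1] Yg_m[OF g1] by measurable
      show "(\<lambda>\<omega>. (Yp 0 \<omega> (enat g) t - Yi t \<omega>) + (Yi t \<omega> - Yi (g - 1) \<omega>)) \<in> borel_measurable M"
        using Yg_m[OF t1] Yi_m[OF t1] Yi_m[OF g1] by measurable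
      show "AE \<omega> in M. Yp 0 \<omega> (enat g) t - Yp 0 \<omega> (enat g) (g - 1) = (Yp 0 \<omega> (enat g) t - Yi t \<omega>) + (Yi t \<omega> - Yi (g - 1) \<omega>)"
        using noant
      proof eventually_elim
        case (elim \<omega>)
        then have "Yp 0 \<omega> (enat g) (g - 1) = Yp 0 \<omega> \<infinity> (g - 1)" using gG g2 by auto
        then show ?case by (simp add: Yi_def)
      qed
    qed
    also have "\<dots> = ce (\<lambda>\<omega>. Yp 0 \<omega> (enat g) t - Yi t \<omega>) (enat g) True + ce (\<lambda>\<omega>. Yi t \<omega> - Yi (g - 1) \<omega>) (enat g) True"
    proof (rule ce_add[where X="\<lambda>\<omega>. Yp 0 \<omega> (enat g) t - Yi t \<omega>" and Z="\<lambda>\<omega>. Yi t \<omega> - Yi (g - 1) \<omega>"])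
      show "integrable M (\<lambda>\<omega>. Yp 0 \<omega> (enat g) t - Yi t \<omega>)"
        by (rule Bochner_Integration.integrable_diff[OF Yg_i[OF t1] Yi_i[OF t1]])
      show "integrable M (\<lambda>\<omega>. Yi t \<omega> - Yi (g - 1) \<omega>)"
        by (rule Bochner_Integration.integrable_diff[OF Yi_i[OF t1] Yi_i[OF g1]])
    qed
    also have "ce (\<lambda>\<omega>. Yp 0 \<omega> (enat g) t - Yi t \<omega>) (enat g) True = CATT M Sv Qv Yp g e"
      unfolding CATT_def t_def Yi_def by simp
    also have "ce (\<lambda>\<omega>. Yi t \<omega> - Yi (g - 1) \<omega>) (enat g) True = ce (Yi t) (enat g) True - ce (Yi (g - 1)) (enat g) True"
      by (rule ce_diff[OF Yi_i[OF t1] Yi_i[OF g1]])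
    finally show ?thesis .
  qed
  have c2: "ceq (enat g) False t g = ce (Yi t) (enat g) False - ce (Yi (g - 1)) (enat g) False"
    unfolding ceq_def Yobs_def using ce_diff[OF Yi_i[OF t1] Yi_i[OF g1]] by (simp add: Yi_def)
  have c4: "ceq (gc g) False t g = ce (Yi t) (gc g) False - ce (Yi (g - 1)) (gc g) False"
    unfolding ceq_def Yobs_def using ce_diff[OF Yi_i[OF t1] Yi_i[OF g1]] by (simp add: Yi_def)
  have c3: "ceq (gc g) True t g = ce (Yi t) (gc g) True - ce (Yi (g - 1)) (gc g) True"
  proof (cases "gc g = \<infinity>")
    case True
    then show ?thesis
      unfolding ceq_def Yobs_def using ce_diff[OF Yi_i[OF t1] Yi_i[OF g1]] by (simp add: Yi_def)
  next
    case False
    then obtain g'' where g'': "gc g = enat g''" by auto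
    have g''G: "g'' \<in> Gtrg SS" using gcS g'' by (simp add: Gtrg_def)
    have lt: "g + K < g''" using gcl g'' by simp
    have Ym: "(\<lambda>\<omega>. Yp 0 \<omega> (enat g'') u) \<in> borel_measurable M" if "u \<in> {1..T}" for u
      using Yp_meas[OF _ that, of "enat g''" 0] gcS g'' by simp
    have "ceq (gc g) True t g = ce (\<lambda>\<omega>. Yp 0 \<omega> (enat g'') t - Yp 0 \<omega> (enat g'') (g - 1)) (gc g) True"
      unfolding ceq_def using gcS g'' by (simp add: Yobs_def)
    also have "\<dots> = ce (\<lambda>\<omega>. Yi t \<omega> - Yi (g - 1) \<omega>) (gc g) True"
    proof (rule ce_AE)
      show "(\<lambda>\<omega>. Yp 0 \<omega> (enat g'') t - Yp 0 \<omega> (enat g'') (g - 1)) \<in> borel_measurable M"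
        using Ym[OF t1] Ym[OF g1] by measurable
      show "(\<lambda>\<omega>. Yi t \<omega> - Yi (g - 1) \<omega>) \<in> borel_measurable M"
        using Yi_m[OF t1] Yi_m[OF g1] by measurable
      show "AE \<omega> in M. Yp 0 \<omega> (enat g'') t - Yp 0 \<omega> (enat g'') (g - 1) = Yi t \<omega> - Yi (g - 1) \<omega>"
        using noant
      proof eventually_elim
        case (elim \<omega>)
        have "t < g''" "g - 1 < g''" using t lt by auto
        then show ?case using elim g''G by (simp add: Yi_def)
      qed
    qed
    also have "\<dots> = ce (Yi t) (gc g) True - ce (Yi (g - 1)) (gc g) True"
      by (rule ce_diff[OF Yi_i[OF t1] Yi_i[OF g1]])
    finally show ?thesis .
  qed
  have step: "F u = F (u - 1)" if u: "2 \<le> u" "u \<le> T" "u \<le> g + K" for u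
  proof -
    have u1: "u \<in> {1..T}" "u - 1 \<in> {1..T}" using u by auto
    have DT: "Delta_trend M Sv Qv Yp u s q = ce (Yi u) s q - ce (Yi (u - 1)) s q" for s q
      unfolding Delta_trend_def using ce_diff[OF Yi_i[OF u1(1)] Yi_i[OF u1(2)]] by (simp add: Yi_def)
    have a1: "enat g \<le> enat (g + K)" and a2: "enat u \<le> enat (g + K)" using u by auto
    have "enat g < gc g" by (rule le_less_trans[OF a1 gcl])
    moreover have "enat u \<le> gc g" by (rule less_imp_le[OF le_less_trans[OF a2 gcl]])
    ultimately have "Delta_trend M Sv Qv Yp u (enat g) True - Delta_trend M Sv Qv Yp u (enat g) False
         = Delta_trend M Sv Qv Yp u (gc g) True - Delta_trend M Sv Qv Yp u (gc g) False"
      using pct gG gcS u by blast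
    then show ?thesis unfolding DT F_def by simp
  qed
  have const: "\<forall>u. 1 \<le> u \<and> u \<le> T \<and> u \<le> g + K \<longrightarrow> F u = F 1"
  proof (intro allI)
    fix u show "1 \<le> u \<and> u \<le> T \<and> u \<le> g + K \<longrightarrow> F u = F 1"
    proof (induction u)
      case 0 then show ?case by simp
    next
      case (Suc u)
      show ?case
      proof
        assume a: "1 \<le> Suc u \<and> Suc u \<le> T \<and> Suc u \<le> g + K"
        show "F (Suc u) = F 1"
        proof (cases "u = 0")
          case True then show ?thesis by simp
        next
          case False
          then have "F (Suc u) = F u" using step[of "Suc u"] a by simp
          also have "F u = F 1" using Suc.IH a False by simp
          finally show ?thesis .
        qed
      qed
    qed
  qed
  have b: "1 \<le> g - 1" "g - 1 \<le> T" "g - 1 \<le> g + K" using g2 by auto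
  have Ft: "F t = F (g - 1)" using const[rule_format, of t] const[rule_format, of "g - 1"] t b by simp
  have "Dlim g t = CATT M Sv Qv Yp g e + (F t - F (g - 1))"
    unfolding Dlim_def c1 c2 c3 c4 F_def by simp
  then show ?thesis using Ft by (simp add: t_def)
qed


lemma partB:
  "\<forall>e\<in>event_times L K. Gtrg_e T SS e \<noteq> {} \<longrightarrow>
          (\<exists>wstar :: nat \<Rightarrow> real.
              (\<forall>g\<in>Gtrg_e T SS e. 0 < wstar g)
            \<and> (\<Sum>g\<in>Gtrg_e T SS e. wstar g) = 1
            \<and> (\<forall>g\<in>Gtrg_e T SS e.
                 conv_prob M (\<lambda>n \<omega>. w_fwl T SS gc n (\<lambda>i. Sv i \<omega>) (\<lambda>i. Qv i \<omega>) e g) (wstar g))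
            \<and> conv_prob M
                (\<lambda>n \<omega>. ols_tau T L K SS gc n (\<lambda>i. Sv i \<omega>) (\<lambda>i. Qv i \<omega>)
                          (\<lambda>i t. Yobs SS (Sv i \<omega>) (Qv i \<omega>) (Yp i \<omega>) t) e)
                (\<Sum>g\<in>Gtrg_e T SS e. wstar g * CATT M Sv Qv Yp g e))"
proof (intro ballI impI)
  fix e assume e: "e \<in> event_times L K" and ne: "Gtrg_e T SS e \<noteq> {}"
  have lim: "(\<Sum>g\<in>Gtrg_e T SS e. wstar e g * Dlim g (nat (int g + e))) = (\<Sum>g\<in>Gtrg_e T SS e. wstar e g * CATT M Sv Qv Yp g e)"
    by (rule sum.cong) (auto simp: ident[OF _ e])
  have "conv_prob M
                (\<lambda>n \<omega>. ols_tau T L K SS gc n (\<lambda>i. Sv i \<omega>) (\<lambda>i. Qv i \<omega>)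
                          (\<lambda>i t. Yobs SS (Sv i \<omega>) (Qv i \<omega>) (Yp i \<omega>) t) e)
                (\<Sum>g\<in>Gtrg_e T SS e. wstar e g * CATT M Sv Qv Yp g e)"
    using ols_conv_Dlim[OF e ne] unfolding lim Yw_def .
  then show "\<exists>wstar :: nat \<Rightarrow> real.
              (\<forall>g\<in>Gtrg_e T SS e. 0 < wstar g)
            \<and> (\<Sum>g\<in>Gtrg_e T SS e. wstar g) = 1
            \<and> (\<forall>g\<in>Gtrg_e T SS e.
                 conv_prob M (\<lambda>n \<omega>. w_fwl T SS gc n (\<lambda>i. Sv i \<omega>) (\<lambda>i. Qv i \<omega>) e g) (wstar g))
            \<and> conv_prob M
                (\<lambda>n \<omega>. ols_tau T L K SS gc n (\<lambda>i. Sv i \<omega>) (\<lambda>i. Qv i \<omega>)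
                          (\<lambda>i t. Yobs SS (Sv i \<omega>) (Qv i \<omega>) (Yp i \<omega>) t) e)
                (\<Sum>g\<in>Gtrg_e T SS e. wstar g * CATT M Sv Qv Yp g e)"
    using wstar_props[OF ne] w_conv by (intro exI[of _ "wstar e"]) auto
qed

end

theorem mainTheorem6:
  fixes T L K :: nat and SS :: "enat set" and gc :: "nat \<Rightarrow> enat"
  assumes L1: "1 \<le> L"
    and SSsub: "SS \<subseteq> enat ` {2..T} \<union> {\<infinity>}"
    and gc: "\<forall>g\<in>Gtrg SS. gc g \<in> SS \<and> enat (g + K) < gc g"
  shows
   "(\<forall>(n::nat) (S::nat \<Rightarrow> enat) (Q::nat \<Rightarrow> bool) (Y::nat \<Rightarrow> nat \<Rightarrow> real) e.
       (\<forall>i<n. S i \<in> SS) \<longrightarrow>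
       (\<forall>g\<in>Gtrg SS. \<forall>s\<in>{enat g, gc g}. \<forall>q. 0 < cell_n n S Q s q) \<longrightarrow>
       e \<in> event_times L K \<longrightarrow> Gtrg_e T SS e \<noteq> {} \<longrightarrow>
         (\<exists>p. is_ols T L K SS gc n S Q Y p)
       \<and> (\<forall>lam eta tau. is_ols T L K SS gc n S Q Y (lam, eta, tau) \<longrightarrow>
            tau e = (\<Sum>g\<in>Gtrg_e T SS e.
                        w_fwl T SS gc n S Q e g * tau_sat gc n S Q Y g (nat (int g + e))))
       \<and> (\<forall>g\<in>Gtrg_e T SS e. 0 < w_fwl T SS gc n S Q e g)
       \<and> (\<Sum>g\<in>Gtrg_e T SS e. w_fwl T SS gc n S Q e g) = 1)
  \<and> (\<forall>(M::'a measure) (Sv::nat \<Rightarrow> 'a \<Rightarrow> enat) (Qv::nat \<Rightarrow> 'a \<Rightarrow> bool)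
        (Yp::nat \<Rightarrow> 'a \<Rightarrow> enat \<Rightarrow> nat \<Rightarrow> real).
       \<comment> \<open>i.i.d. sampling of units\<close>
       prob_space M \<longrightarrow>
       (\<forall>i. unit_rv T SS Sv Qv Yp i \<in> measurable M (unit_space T SS)) \<longrightarrow>
       prob_space.indep_vars M (\<lambda>_. unit_space T SS) (unit_rv T SS Sv Qv Yp) UNIV \<longrightarrow>
       (\<forall>i. distr M (unit_space T SS) (unit_rv T SS Sv Qv Yp i)
              = distr M (unit_space T SS) (unit_rv T SS Sv Qv Yp 0)) \<longrightarrow>
       (\<forall>i. AE \<omega> in M. Sv i \<omega> \<in> SS) \<longrightarrow>
       \<comment> \<open>finite second moments\<close>
       (\<forall>g\<in>insert \<infinity> SS. \<forall>t\<in>{1..T}. integrable M (\<lambda>\<omega>. (Yp 0 \<omega> g t)\<^sup>2)) \<longrightarrow>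
       \<comment> \<open>overlap\<close>
       (\<forall>s\<in>SS. \<forall>q. 0 < measure M {\<omega>\<in>space M. Sv 0 \<omega> = s \<and> Qv 0 \<omega> = q}) \<longrightarrow>
       \<comment> \<open>no anticipation\<close>
       (\<forall>i. AE \<omega> in M. \<forall>g\<in>Gtrg SS. \<forall>t. t < g \<longrightarrow> Yp i \<omega> (enat g) t = Yp i \<omega> \<infinity> t) \<longrightarrow>
       \<comment> \<open>DDD parallel trends\<close>
       (\<forall>g\<in>Gtrg SS. \<forall>g'\<in>SS. \<forall>t. enat g < g' \<and> 2 \<le> t \<and> t \<le> T \<and> enat t \<le> g' \<longrightarrow>
           Delta_trend M Sv Qv Yp t (enat g) True - Delta_trend M Sv Qv Yp t (enat g) False
         = Delta_trend M Sv Qv Yp t g' True - Delta_trend M Sv Qv Yp t g' False) \<longrightarrow>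
       \<comment> \<open>admissibility\<close>
       (\<forall>g\<in>Gtrg SS. \<forall>s\<in>{enat g, gc g}. \<forall>q.
           0 < measure M {\<omega>\<in>space M. Sv 0 \<omega> = s \<and> Qv 0 \<omega> = q}) \<longrightarrow>
       \<comment> \<open>non-vanishing shares\<close>
       (\<forall>g\<in>Gtrg SS.
          (\<exists>c>0. conv_prob M (\<lambda>n \<omega>. real (stack_n gc n (\<lambda>i. Sv i \<omega>) (\<lambda>i. Qv i \<omega>) g) / real n) c)
        \<and> (\<forall>s\<in>{enat g, gc g}. \<forall>q. \<exists>c>0.
             conv_prob M (\<lambda>n \<omega>. real (cell_n n (\<lambda>i. Sv i \<omega>) (\<lambda>i. Qv i \<omega>) s q)
                                 / real (stack_n gc n (\<lambda>i. Sv i \<omega>) (\<lambda>i. Qv i \<omega>) g)) c)) \<longrightarrow>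
       (\<forall>e\<in>event_times L K. Gtrg_e T SS e \<noteq> {} \<longrightarrow>
          (\<exists>wstar :: nat \<Rightarrow> real.
              (\<forall>g\<in>Gtrg_e T SS e. 0 < wstar g)
            \<and> (\<Sum>g\<in>Gtrg_e T SS e. wstar g) = 1
            \<and> (\<forall>g\<in>Gtrg_e T SS e.
                 conv_prob M (\<lambda>n \<omega>. w_fwl T SS gc n (\<lambda>i. Sv i \<omega>) (\<lambda>i. Qv i \<omega>) e g) (wstar g))
            \<and> conv_prob M
                (\<lambda>n \<omega>. ols_tau T L K SS gc n (\<lambda>i. Sv i \<omega>) (\<lambda>i. Qv i \<omega>)
                          (\<lambda>i t. Yobs SS (Sv i \<omega>) (Qv i \<omega>) (Yp i \<omega>) t) e)
                (\<Sum>g\<in>Gtrg_e T SS e. wstar g * CATT M Sv Qv Yp g e))))"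

proof -
  have Gsub: "Gtrg SS \<subseteq> {2..T}" using SSsub unfolding Gtrg_def by auto
  have finG: "finite (Gtrg SS)" using Gsub by (rule finite_subset) simp
  have gcne: "\<forall>g\<in>Gtrg SS. gc g \<noteq> enat g"
  proof
    fix g assume "g \<in> Gtrg SS"
    then have "enat (g + K) < gc g" using gc by blast
    then show "gc g \<noteq> enat g" by auto
  qed
  have A: "\<forall>(n::nat) (S::nat \<Rightarrow> enat) (Q::nat \<Rightarrow> bool) (Y::nat \<Rightarrow> nat \<Rightarrow> real) e.
       (\<forall>i<n. S i \<in> SS) \<longrightarrow>
       (\<forall>g\<in>Gtrg SS. \<forall>s\<in>{enat g, gc g}. \<forall>q. 0 < cell_n n S Q s q) \<longrightarrow>
       e \<in> event_times L K \<longrightarrow> Gtrg_e T SS e \<noteq> {} \<longrightarrow>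
         (\<exists>p. is_ols T L K SS gc n S Q Y p)
       \<and> (\<forall>lam eta tau. is_ols T L K SS gc n S Q Y (lam, eta, tau) \<longrightarrow>
            tau e = (\<Sum>g\<in>Gtrg_e T SS e.
                        w_fwl T SS gc n S Q e g * tau_sat gc n S Q Y g (nat (int g + e))))
       \<and> (\<forall>g\<in>Gtrg_e T SS e. 0 < w_fwl T SS gc n S Q e g)
       \<and> (\<Sum>g\<in>Gtrg_e T SS e. w_fwl T SS gc n S Q e g) = 1"
  proof (intro allI impI)
    fix n S Q Y e
    assume "\<forall>i<n. S i \<in> SS"
      and cp: "\<forall>g\<in>Gtrg SS. \<forall>s\<in>{enat g, gc g}. \<forall>q. 0 < cell_n n S Q s q"
      and e: "e \<in> event_times L K" and ne: "Gtrg_e T SS e \<noteq> {}"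
    show "(\<exists>p. is_ols T L K SS gc n S Q Y p)
       \<and> (\<forall>lam eta tau. is_ols T L K SS gc n S Q Y (lam, eta, tau) \<longrightarrow>
            tau e = (\<Sum>g\<in>Gtrg_e T SS e.
                        w_fwl T SS gc n S Q e g * tau_sat gc n S Q Y g (nat (int g + e))))
       \<and> (\<forall>g\<in>Gtrg_e T SS e. 0 < w_fwl T SS gc n S Q e g)
       \<and> (\<Sum>g\<in>Gtrg_e T SS e. w_fwl T SS gc n S Q e g) = 1"
      by (rule partA_ctx[OF finG cp gcne e ne])
  qed
  have B: "\<forall>(M::'a measure) (Sv::nat \<Rightarrow> 'a \<Rightarrow> enat) (Qv::nat \<Rightarrow> 'a \<Rightarrow> bool)
        (Yp::nat \<Rightarrow> 'a \<Rightarrow> enat \<Rightarrow> nat \<Rightarrow> real).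
        \<comment> \<open>i.i.d. sampling of units\<close>
       prob_space M \<longrightarrow>
       (\<forall>i. unit_rv T SS Sv Qv Yp i \<in> measurable M (unit_space T SS)) \<longrightarrow>
       prob_space.indep_vars M (\<lambda>_. unit_space T SS) (unit_rv T SS Sv Qv Yp) UNIV \<longrightarrow>
       (\<forall>i. distr M (unit_space T SS) (unit_rv T SS Sv Qv Yp i)
              = distr M (unit_space T SS) (unit_rv T SS Sv Qv Yp 0)) \<longrightarrow>
       (\<forall>i. AE \<omega> in M. Sv i \<omega> \<in> SS) \<longrightarrow>
        \<comment> \<open>finite second moments\<close>
       (\<forall>g\<in>insert \<infinity> SS. \<forall>t\<in>{1..T}. integrable M (\<lambda>\<omega>. (Yp 0 \<omega> g t)\<^sup>2)) \<longrightarrow>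
        \<comment> \<open>overlap\<close>
       (\<forall>s\<in>SS. \<forall>q. 0 < measure M {\<omega>\<in>space M. Sv 0 \<omega> = s \<and> Qv 0 \<omega> = q}) \<longrightarrow>
        \<comment> \<open>no anticipation\<close>
       (\<forall>i. AE \<omega> in M. \<forall>g\<in>Gtrg SS. \<forall>t. t < g \<longrightarrow> Yp i \<omega> (enat g) t = Yp i \<omega> \<infinity> t) \<longrightarrow>
        \<comment> \<open>DDD parallel trends\<close>
       (\<forall>g\<in>Gtrg SS. \<forall>g'\<in>SS. \<forall>t. enat g < g' \<and> 2 \<le> t \<and> t \<le> T \<and> enat t \<le> g' \<longrightarrow>
           Delta_trend M Sv Qv Yp t (enat g) True - Delta_trend M Sv Qv Yp t (enat g) False
         = Delta_trend M Sv Qv Yp t g' True - Delta_trend M Sv Qv Yp t g' False) \<longrightarrow>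
        \<comment> \<open>admissibility\<close>
       (\<forall>g\<in>Gtrg SS. \<forall>s\<in>{enat g, gc g}. \<forall>q.
           0 < measure M {\<omega>\<in>space M. Sv 0 \<omega> = s \<and> Qv 0 \<omega> = q}) \<longrightarrow>
        \<comment> \<open>non-vanishing shares\<close>
       (\<forall>g\<in>Gtrg SS.
          (\<exists>c>0. conv_prob M (\<lambda>n \<omega>. real (stack_n gc n (\<lambda>i. Sv i \<omega>) (\<lambda>i. Qv i \<omega>) g) / real n) c)
        \<and> (\<forall>s\<in>{enat g, gc g}. \<forall>q. \<exists>c>0.
             conv_prob M (\<lambda>n \<omega>. real (cell_n n (\<lambda>i. Sv i \<omega>) (\<lambda>i. Qv i \<omega>) s q)
                                 / real (stack_n gc n (\<lambda>i. Sv i \<omega>) (\<lambda>i. Qv i \<omega>) g)) c)) \<longrightarrow>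
       (\<forall>e\<in>event_times L K. Gtrg_e T SS e \<noteq> {} \<longrightarrow>
          (\<exists>wstar :: nat \<Rightarrow> real.
              (\<forall>g\<in>Gtrg_e T SS e. 0 < wstar g)
            \<and> (\<Sum>g\<in>Gtrg_e T SS e. wstar g) = 1
            \<and> (\<forall>g\<in>Gtrg_e T SS e.
                 conv_prob M (\<lambda>n \<omega>. w_fwl T SS gc n (\<lambda>i. Sv i \<omega>) (\<lambda>i. Qv i \<omega>) e g) (wstar g))
            \<and> conv_prob M
                (\<lambda>n \<omega>. ols_tau T L K SS gc n (\<lambda>i. Sv i \<omega>) (\<lambda>i. Qv i \<omega>)
                          (\<lambda>i t. Yobs SS (Sv i \<omega>) (Qv i \<omega>) (Yp i \<omega>) t) e)
                (\<Sum>g\<in>Gtrg_e T SS e. wstar g * CATT M Sv Qv Yp g e)))"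
  proof (intro allI impI)
    fix M :: "'a measure" and Sv :: "nat \<Rightarrow> 'a \<Rightarrow> enat" and Qv :: "nat \<Rightarrow> 'a \<Rightarrow> bool"
      and Yp :: "nat \<Rightarrow> 'a \<Rightarrow> enat \<Rightarrow> nat \<Rightarrow> real"
    assume h1: "prob_space M"
    assume h2: "(\<forall>i. unit_rv T SS Sv Qv Yp i \<in> measurable M (unit_space T SS))"
    assume h3: "prob_space.indep_vars M (\<lambda>_. unit_space T SS) (unit_rv T SS Sv Qv Yp) UNIV"
    assume h4: "(\<forall>i. distr M (unit_space T SS) (unit_rv T SS Sv Qv Yp i)
              = distr M (unit_space T SS) (unit_rv T SS Sv Qv Yp 0))"
    assume h5: "(\<forall>i. AE \<omega> in M. Sv i \<omega> \<in> SS)"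
    assume h6: "(\<forall>g\<in>insert \<infinity> SS. \<forall>t\<in>{1..T}. integrable M (\<lambda>\<omega>. (Yp 0 \<omega> g t)\<^sup>2))"
    assume h7: "(\<forall>s\<in>SS. \<forall>q. 0 < measure M {\<omega>\<in>space M. Sv 0 \<omega> = s \<and> Qv 0 \<omega> = q})"
    assume h8: "(\<forall>i. AE \<omega> in M. \<forall>g\<in>Gtrg SS. \<forall>t. t < g \<longrightarrow> Yp i \<omega> (enat g) t = Yp i \<omega> \<infinity> t)"
    assume h9: "(\<forall>g\<in>Gtrg SS. \<forall>g'\<in>SS. \<forall>t. enat g < g' \<and> 2 \<le> t \<and> t \<le> T \<and> enat t \<le> g' \<longrightarrow>
           Delta_trend M Sv Qv Yp t (enat g) True - Delta_trend M Sv Qv Yp t (enat g) False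
         = Delta_trend M Sv Qv Yp t g' True - Delta_trend M Sv Qv Yp t g' False)"
    assume h10: "(\<forall>g\<in>Gtrg SS. \<forall>s\<in>{enat g, gc g}. \<forall>q.
           0 < measure M {\<omega>\<in>space M. Sv 0 \<omega> = s \<and> Qv 0 \<omega> = q})"
    assume h11: "(\<forall>g\<in>Gtrg SS.
          (\<exists>c>0. conv_prob M (\<lambda>n \<omega>. real (stack_n gc n (\<lambda>i. Sv i \<omega>) (\<lambda>i. Qv i \<omega>) g) / real n) c)
        \<and> (\<forall>s\<in>{enat g, gc g}. \<forall>q. \<exists>c>0.
             conv_prob M (\<lambda>n \<omega>. real (cell_n n (\<lambda>i. Sv i \<omega>) (\<lambda>i. Qv i \<omega>) s q)
                                 / real (stack_n gc n (\<lambda>i. Sv i \<omega>) (\<lambda>i. Qv i \<omega>) g)) c))"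
    have D: "ddd M T K SS gc Sv Qv Yp"
    proof (rule ddd.intro[OF h1], rule ddd_axioms.intro)
      show "SS \<subseteq> enat ` {2..T} \<union> {\<infinity>}" by (rule SSsub)
      show "\<forall>g\<in>Gtrg SS. gc g \<in> SS \<and> enat (g + K) < gc g" by (rule gc)
      show "\<And>i. unit_rv T SS Sv Qv Yp i \<in> measurable M (unit_space T SS)" using h2 by blast
      show "prob_space.indep_vars M (\<lambda>_. unit_space T SS) (unit_rv T SS Sv Qv Yp) UNIV" by (rule h3)
      show "\<And>i. distr M (unit_space T SS) (unit_rv T SS Sv Qv Yp i) = distr M (unit_space T SS) (unit_rv T SS Sv Qv Yp 0)"
        using h4 by blast
      show "\<forall>g\<in>insert \<infinity> SS. \<forall>t\<in>{1..T}. integrable M (\<lambda>\<omega>. (Yp 0 \<omega> g t)\<^sup>2)" by (rule h6)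
      show "AE \<omega> in M. \<forall>g\<in>Gtrg SS. \<forall>t. t < g \<longrightarrow> Yp 0 \<omega> (enat g) t = Yp 0 \<omega> \<infinity> t" using h8 by blast
      show "\<forall>g\<in>Gtrg SS. \<forall>g'\<in>SS. \<forall>t. enat g < g' \<and> 2 \<le> t \<and> t \<le> T \<and> enat t \<le> g' \<longrightarrow>
           Delta_trend M Sv Qv Yp t (enat g) True - Delta_trend M Sv Qv Yp t (enat g) False
         = Delta_trend M Sv Qv Yp t g' True - Delta_trend M Sv Qv Yp t g' False" by (rule h9)
      show "\<forall>g\<in>Gtrg SS. \<forall>s\<in>{enat g, gc g}. \<forall>q.
           0 < measure M {\<omega>\<in>space M. Sv 0 \<omega> = s \<and> Qv 0 \<omega> = q}" by (rule h10)
    qed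
    show "(\<forall>e\<in>event_times L K. Gtrg_e T SS e \<noteq> {} \<longrightarrow>
          (\<exists>wstar :: nat \<Rightarrow> real.
              (\<forall>g\<in>Gtrg_e T SS e. 0 < wstar g)
            \<and> (\<Sum>g\<in>Gtrg_e T SS e. wstar g) = 1
            \<and> (\<forall>g\<in>Gtrg_e T SS e.
                 conv_prob M (\<lambda>n \<omega>. w_fwl T SS gc n (\<lambda>i. Sv i \<omega>) (\<lambda>i. Qv i \<omega>) e g) (wstar g))
            \<and> conv_prob M
                (\<lambda>n \<omega>. ols_tau T L K SS gc n (\<lambda>i. Sv i \<omega>) (\<lambda>i. Qv i \<omega>)
                          (\<lambda>i t. Yobs SS (Sv i \<omega>) (Qv i \<omega>) (Yp i \<omega>) t) e)
                (\<Sum>g\<in>Gtrg_e T SS e. wstar g * CATT M Sv Qv Yp g e)))" by (rule ddd.partB[OF D])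
  qed
  show ?thesis using A B by blast
qed

end
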